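(* Let $f$ satisfy $(\mathcal A)$, let $t_0>0$, $q>0$, $p\ge1$, $\gamma>1$. Let $x:[t_0,+\infty[\to\mathcal H$ be twice continuously differentiable and $\lambda:[t_0,+\infty[\to\,]0,+\infty[$ continuously differentiable, and let $\tau(t)=\frac{1}{q^q}\big(t_0+\int_{t_0}^t[\lambda(r)]^{1/q}dr\big)^q$, such that for all $t\ge t_0$: $$\ddot x(t)+\frac{(1+\gamma)\dot\tau(t)^2-\tau(t)\ddot\tau(t)}{\tau(t)\dot\tau(t)}\dot x(t)+\gamma\frac{\dot\tau(t)^2}{\tau(t)}\nabla f\Big(x(t)+\frac1\gamma\frac{\tau(t)}{\dot\tau(t)}\dot x(t)\Big)=0,$$ $$[\lambda(t)]^p|\dot\tau(t)|^{p-1}\Big\|\nabla f\Big(x(t)+\frac1\gamma\frac{\tau(t)}{\dot\tau(t)}\dot x(t)\Big)\Big\|^{p-1}=1 .$$ Then $f(x(t))-\inf_{\mathcal H}f=o\big(t^{-(1+q-\frac1p)}\big)$ as $t\to+\infty$, and $x(t)$ converges weakly as $t\to+\infty$ to an element of $S=\operatorname{argmin} f$.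
   Context: $\mathcal H$ is a real Hilbert space. Assumption $(\mathcal A)$: $f:\mathcal H\to\mathbb R$ is convex and continuously differentiable, $S=\operatorname{argmin}_{\mathcal H} f\neq\emptyset$, and $\nabla f$ is Lipschitz continuous on bounded subsets of $\mathcal H$. *)

theory Defs
  imports "HOL-Analysis.Analysis" "HOL-Library.Landau_Symbols"
begin

definition weak_conv_at_top :: "(real \<Rightarrow> 'a::real_inner) \<Rightarrow> 'a \<Rightarrow> bool" where
  "weak_conv_at_top x z \<longleftrightarrow> (\<forall>y. ((\<lambda>t. x t \<bullet> y) \<longlongrightarrow> z \<bullet> y) at_top)"

end

theory Submission
  imports Defs "HOL-Library.Diagonal_Subsequence"
begin


lemma sq_aux: "0 \<le> (d::real) \<Longrightarrow> 0 \<le> e \<Longrightarrow> e \<le> 1 \<Longrightarrow> (d+e)\<^sup>2 \<le> d\<^sup>2 + (2*d+1)*e"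
proof -
  assume a: "0 \<le> d" "0 \<le> e" "e \<le> 1"
  have "e*e \<le> e" using mult_left_le_one_le[of e e] a by simp
  then show ?thesis by (simp add: power2_eq_square algebra_simps)
qed

lemma lin_aux: "(N::real) = 2*a + 2*b - 4*c \<Longrightarrow> a \<le> A \<Longrightarrow> A \<le> X \<Longrightarrow> b \<le> B \<Longrightarrow> B \<le> Y \<Longrightarrow> D \<le> c \<Longrightarrow> N \<le> 2*X + 2*Y - 4*D"
  by linarith

lemma proj_subspace:
  fixes M :: "'a::{real_inner,complete_space} set"
  assumes sub: "subspace M" and cl: "closed M"
  shows "\<exists>p\<in>M. \<forall>m\<in>M. inner (v - p) m = 0"
proof -
  have M0: "0 \<in> M" using sub by (simp add: subspace_0)
  define d where "d = infdist v M"
  have d0: "0 \<le> d" by (simp add: d_def infdist_nonneg)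
  have dle: "d \<le> norm (v - m)" if "m \<in> M" for m
    using infdist_le[OF that, of v] by (simp add: d_def dist_norm)
  have "\<exists>c. c \<in> M \<and> norm (v - c) < d + 1/(real n + 1)" for n
  proof -
    have e: "infdist v M = (INF a\<in>M. dist v a)" using M0 by (intro infdist_notempty) auto
    have "(INF a\<in>M. dist v a) < d + 1/(real n+1)"
      unfolding d_def e[symmetric] by (simp add: add_pos_nonneg)
    then obtain a where "a \<in> M" "dist v a < d + 1/(real n+1)"
      using M0 by (subst (asm) cINF_less_iff) (auto intro: bdd_belowI[of _ 0])
    then show ?thesis by (auto simp: dist_norm)
  qed
  then obtain c where cM: "\<And>n. c n \<in> M" and cd: "\<And>n. norm (v - c n) < d + 1/(real n + 1)"
    by metis
  have mid: "d \<le> norm (v - (1/2) *\<^sub>R (c n + c m))" for n m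
    apply (rule dle)
    using cM sub by (simp add: subspace_add subspace_scale)
  have para: "(norm (c n - c m))\<^sup>2 \<le> 2 * (2*d+1) * (1/(real n+1) + 1/(real m + 1))" for n m
  proof -
    let ?a = "v - c n" and ?b = "v - c m"
    have eq: "(norm (c n - c m))\<^sup>2 = 2*(norm ?a)\<^sup>2 + 2*(norm ?b)\<^sup>2 - 4*(norm (v - (1/2) *\<^sub>R (c n + c m)))\<^sup>2"
      unfolding power2_norm_eq_inner
      by (simp add: inner_diff inner_add inner_commute algebra_simps)
    have ha: "(norm ?a)\<^sup>2 \<le> (d + 1/(real n+1))\<^sup>2"
      using cd[of n] by (intro power_mono) auto
    have hb: "(norm ?b)\<^sup>2 \<le> (d + 1/(real m+1))\<^sup>2"
      using cd[of m] by (intro power_mono) auto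
    have hm: "d\<^sup>2 \<le> (norm (v - (1/2) *\<^sub>R (c n + c m)))\<^sup>2"
      using mid d0 by (intro power_mono) auto
    have en: "1/(real n+1) \<le> 1" "0 \<le> 1/(real n+1)" by (auto simp: field_simps)
    have em: "1/(real m+1) \<le> 1" "0 \<le> 1/(real m+1)" by (auto simp: field_simps)
    have "(d + 1/(real n+1))\<^sup>2 \<le> d\<^sup>2 + (2*d+1) * (1/(real n+1))"
      using en d0 by (intro sq_aux) auto
    moreover have "(d + 1/(real m+1))\<^sup>2 \<le> d\<^sup>2 + (2*d+1) * (1/(real m+1))"
      using em d0 by (intro sq_aux) auto
    ultimately have "(norm (c n - c m))\<^sup>2 \<le> 2*(d\<^sup>2 + (2*d+1) * (1/(real n+1))) + 2*(d\<^sup>2 + (2*d+1) * (1/(real m+1))) - 4*d\<^sup>2"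
      by (rule lin_aux[OF eq ha _ hb _ hm])
    also have "\<dots> = 2 * (2*d+1) * (1/(real n+1) + 1/(real m + 1))" by (simp add: algebra_simps)
    finally show ?thesis .
  qed
  have "Cauchy c"
  proof (rule CauchyI)
    fix e :: real assume e: "0 < e"
    define K where "K = 4 * (2*d+1)"
    have K: "K > 0" using d0 by (simp add: K_def)
    obtain N :: nat where N: "K / (e*e) < real N" using reals_Archimedean2 by blast
    show "\<exists>N. \<forall>m\<ge>N. \<forall>n\<ge>N. norm (c m - c n) < e"
    proof (intro exI allI impI)
      fix m n assume mN: "m \<ge> N" and nN: "n \<ge> N"
      have "1/(real m+1) \<le> 1/(real N+1)" "1/(real n+1) \<le> 1/(real N+1)"
        using mN nN by (auto simp: field_simps)
      then have "2 * (2*d+1) * (1/(real m+1) + 1/(real n + 1)) \<le> 2 * (2*d+1) * (1/(real N+1) + 1/(real N + 1))"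
        using d0 by (intro mult_left_mono) auto
      then have "(norm (c m - c n))\<^sup>2 \<le> K * (1/(real N+1))"
        using para[of m n] unfolding K_def by (simp add: algebra_simps)
      also have "\<dots> < e\<^sup>2"
        using N K e by (simp add: field_simps power2_eq_square) (smt (verit) mult_pos_pos)
      finally show "norm (c m - c n) < e"
        using e by (simp add: power_less_imp_less_base)
    qed
  qed
  then obtain p where cp: "c \<longlonglongrightarrow> p" using Cauchy_convergent_iff convergent_def by blast
  have pM: "p \<in> M" using cl cM cp closed_sequentially by blast
  have "norm (v - p) \<le> d"
  proof -
    have l: "(\<lambda>n. norm (v - c n)) \<longlonglongrightarrow> norm (v - p)"
      by (intro tendsto_intros cp)
    have r: "(\<lambda>n. d + 1/(real n+1)) \<longlonglongrightarrow> d"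
      using LIMSEQ_inverse_real_of_nat_add[of d] by (simp add: inverse_eq_divide add.commute)
    show ?thesis using tendsto_le[OF _ r l] cd by (simp add: less_imp_le)
  qed
  then have pmin: "norm (v - p) \<le> norm (v - m)" if "m \<in> M" for m
    using dle[OF that] by simp
  show ?thesis
  proof (intro bexI[OF _ pM] ballI)
    fix m assume mM: "m \<in> M"
    define a where "a = inner (v - p) m"
    define b where "b = inner m m"
    have b0: "b \<ge> 0" by (simp add: b_def)
    define t where "t = a / (b + 1)"
    have "p + t *\<^sub>R m \<in> M" using pM mM sub by (simp add: subspace_add subspace_scale)
    then have "(norm (v - p))\<^sup>2 \<le> (norm (v - (p + t *\<^sub>R m)))\<^sup>2"
      using pmin by (intro power_mono) auto
    also have "\<dots> = (norm (v - p))\<^sup>2 - 2*t*a + t*t*b"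
      unfolding power2_norm_eq_inner a_def b_def
      by (simp add: inner_diff inner_add inner_commute algebra_simps)
    finally have h0: "0 \<le> t*(t*b - 2*a)" by (simp add: algebra_simps)
    have ta: "(b+1)*t = a" using b0 by (simp add: t_def)
    have "(b+1)*(b+1)*(t*(t*b - 2*a)) = ((b+1)*t)*((b+1)*t)*b - 2*a*((b+1)*t)*(b+1)"
      by (simp add: algebra_simps)
    also have "\<dots> = -(a*a)*(b+2)" unfolding ta by (simp add: algebra_simps)
    finally have "0 \<le> -(a*a)*(b+2)" using h0 b0
      by (metis mult_nonneg_nonneg zero_le_square)
    then have "a * a \<le> 0" using b0
      by (metis add_nonneg_pos mult_le_0_iff neg_0_le_iff_le zero_less_numeral mult_minus_left linorder_not_le)
    then show "inner (v - p) m = 0" unfolding a_def by (simp add: mult_le_0_iff) linarith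
  qed
qed

lemma riesz:
  fixes L :: "'a::{real_inner,complete_space} \<Rightarrow> real"
  assumes bl: "bounded_linear L"
  shows "\<exists>u. \<forall>h. L h = inner h u"
proof (cases "\<forall>h. L h = 0")
  case True then show ?thesis by (intro exI[of _ 0]) simp
next
  case False
  then obtain v0 where v0: "L v0 \<noteq> 0" by auto
  interpret L: bounded_linear L by fact
  define N where "N = {h. L h = 0}"
  have subN: "subspace N" unfolding N_def subspace_def by (auto simp: L.add L.scale)
  have clN: "closed N" unfolding N_def
    by (intro closed_Collect_eq continuous_on_const L.continuous_on continuous_on_id)
  obtain p where pN: "p \<in> N" and orth: "\<And>m. m \<in> N \<Longrightarrow> inner (v0 - p) m = 0"
    using proj_subspace[OF subN clN, of v0] by blast
  define w where "w = v0 - p"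
  have Lw: "L w = L v0" using pN by (simp add: w_def N_def L.diff)
  have "w \<noteq> 0" using Lw v0 L.zero by auto
  then have ww: "inner w w \<noteq> 0" by simp
  show ?thesis
  proof (intro exI[of _ "(L w / inner w w) *\<^sub>R w"] allI)
    fix h
    have "h - (L h / L w) *\<^sub>R w \<in> N" using Lw v0 by (simp add: N_def L.diff L.scale)
    then have "inner w (h - (L h / L w) *\<^sub>R w) = 0" using orth by (simp add: w_def)
    then have "inner w h = (L h / L w) * inner w w" by (simp add: inner_diff_right)
    then show "L h = inner h ((L w / inner w w) *\<^sub>R w)"
      using ww Lw v0 by (simp add: inner_commute field_simps)
  qed
qed

lemma subspace_closure_aux:
  fixes V :: "'a::real_normed_vector set"
  assumes sV: "subspace V" shows "subspace (closure V)"
  unfolding subspace_def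
proof (intro conjI ballI allI)
  show "0 \<in> closure V" using sV closure_subset subspace_0 by blast
next
  fix x y assume "x \<in> closure V" "y \<in> closure V"
  then obtain a b where ab: "\<forall>n. a n \<in> V" "a \<longlonglongrightarrow> x" "\<forall>n. b n \<in> V" "b \<longlonglongrightarrow> y"
    unfolding closure_sequential by metis
  then show "x + y \<in> closure V" unfolding closure_sequential
    by (intro exI[of _ "\<lambda>n. a n + b n"]) (auto intro: tendsto_add subspace_add[OF sV])
next
  fix c x assume "x \<in> closure V"
  then obtain a where ab: "\<forall>n. a n \<in> V" "a \<longlonglongrightarrow> x"
    unfolding closure_sequential by metis
  then show "c *\<^sub>R x \<in> closure V" unfolding closure_sequential
    by (intro exI[of _ "\<lambda>n. c *\<^sub>R a n"]) (auto intro: tendsto_scaleR tendsto_const subspace_scale[OF sV])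
qed

lemma weak_compact:
  fixes s :: "nat \<Rightarrow> 'a::{real_inner,complete_space}"
  assumes bnd: "\<And>n. norm (s n) \<le> B"
  shows "\<exists>r u. strict_mono r \<and> (\<forall>v. (\<lambda>n. inner (s (r n)) v) \<longlonglongrightarrow> inner u v)"
proof -
  have B0: "0 \<le> B" using bnd[of 0] norm_ge_zero order_trans by blast
  have ib: "\<bar>inner (s n) v\<bar> \<le> B * norm v" for n v
    using Cauchy_Schwarz_ineq2[of "s n" v] bnd[of n] by (meson mult_right_mono norm_ge_zero order_trans)
  let ?P = "\<lambda>k r. convergent (\<lambda>n. inner (s (r n)) (s k))"
  interpret S: subseqs ?P
  proof (unfold convergent_def, unfold subseqs_def, auto)
    fix k :: nat and r :: "nat \<Rightarrow> nat" assume r: "strict_mono r"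
    let ?M = "B * B"
    have "bounded {-?M..?M}"
      using bounded_closed_interval by auto
    moreover have "\<And>n. inner (s (r n)) (s k) \<in> {-?M..?M}"
      using ib[of "r n" "s k" for n] bnd[of k] B0
      by (simp add: abs_le_iff) (smt (verit, best) mult_left_mono)
    ultimately have "\<exists>l s'. strict_mono s' \<and> ((\<lambda>n. inner (s (r n)) (s k)) \<circ> s') \<longlonglongrightarrow> l"
      using compact_Icc compact_imp_seq_compact seq_compactE by metis
    thus "\<exists>s'. strict_mono (s'::nat\<Rightarrow>nat) \<and> (\<exists>l. (\<lambda>n. inner (s (r (s' n))) (s k)) \<longlonglongrightarrow> l)"
      by (auto simp: comp_def)
  qed
  define d where "d = S.diagseq"
  have subseq: "strict_mono d"
    unfolding d_def using S.subseq_diagseq by auto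
  have cnv: "?P k d" for k
  proof -
    have Pn_seqseq: "?P k (S.seqseq (Suc k))"
      by (rule S.seqseq_holds)
    have 1: "(\<lambda>n. inner (s ((S.seqseq (Suc k) \<circ> (\<lambda>n. S.fold_reduce (Suc k) n
      (Suc k + n))) n)) (s k)) = (\<lambda>n. inner (s (S.seqseq (Suc k) n)) (s k)) \<circ>
      (\<lambda>n. S.fold_reduce (Suc k) n (Suc k + n))"
      by auto
    have 2: "?P k (d \<circ> ((+) (Suc k)))"
      unfolding d_def S.diagseq_seqseq 1
      by (intro convergent_subseq_convergent Pn_seqseq S.subseq_diagonal_rest)
    then obtain L where 3: "(\<lambda>na. inner (s (d (na + Suc k))) (s k)) \<longlonglongrightarrow> L"
      by (auto simp: add.commute dest: convergentD)
    then have "(\<lambda>n. inner (s (d n)) (s k)) \<longlonglongrightarrow> L"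
      by (rule LIMSEQ_offset)
    then show ?thesis
      by (auto simp: convergent_def)
  qed
  define V where "V = span (range s)"
  define M where "M = closure V"
  have cV: "convergent (\<lambda>n. inner (s (d n)) v)" if "v \<in> V" for v
    using that unfolding V_def
  proof (induct rule: span_induct)
    case base
    have a: "convergent (\<lambda>n. inner (s (d n)) (x + y))"
      if "convergent (\<lambda>n. inner (s (d n)) x)" "convergent (\<lambda>n. inner (s (d n)) y)" for x y
      using that by (simp add: inner_add_right convergent_add)
    have b: "convergent (\<lambda>n. inner (s (d n)) (c *\<^sub>R x))"
      if "convergent (\<lambda>n. inner (s (d n)) x)" for c x
      using convergent_mult[OF convergent_const[of c] that] by simp
    show ?case unfolding subspace_def mem_Collect_eq using a b convergent_const[of "0::real"] by auto
  next
    case (step x)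
    then show ?case using cnv by auto
  qed
  have cM: "convergent (\<lambda>n. inner (s (d n)) v)" if vM: "v \<in> M" for v
  proof -
    have "Cauchy (\<lambda>n. inner (s (d n)) v)"
    proof (rule CauchyI)
      fix e :: real assume e: "0 < e"
      obtain w where wV: "w \<in> V" and wv: "dist w v < e / (3 * (B + 1))"
        using vM e B0 unfolding M_def closure_approachable by (metis divide_pos_pos mult_pos_pos zero_less_numeral add_nonneg_pos zero_less_one)
      have "Cauchy (\<lambda>n. inner (s (d n)) w)" using cV[OF wV] Cauchy_convergent_iff by blast
      then obtain N where N: "\<And>m n. m \<ge> N \<Longrightarrow> n \<ge> N \<Longrightarrow> norm (inner (s (d m)) w - inner (s (d n)) w) < e/3"
        using e unfolding Cauchy_iff by (metis divide_pos_pos zero_less_numeral)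
      show "\<exists>N. \<forall>m\<ge>N. \<forall>n\<ge>N. norm (inner (s (d m)) v - inner (s (d n)) v) < e"
      proof (intro exI allI impI)
        fix m n assume mn: "m \<ge> N" "n \<ge> N"
        have eq: "inner (s (d m)) v - inner (s (d n)) v = inner (s (d m)) (v - w) - inner (s (d n)) (v - w) + (inner (s (d m)) w - inner (s (d n)) w)"
          by (simp add: inner_diff_right)
        have "\<bar>inner (s (d m)) (v - w)\<bar> \<le> B * norm (v - w)" "\<bar>inner (s (d n)) (v - w)\<bar> \<le> B * norm (v - w)"
          using ib by auto
        moreover have "B * norm (v - w) \<le> (B + 1) * (e / (3 * (B + 1)))"
          using wv B0 by (intro mult_mono) (auto simp: dist_norm norm_minus_commute)
        moreover have "(B + 1) * (e / (3 * (B + 1))) = e / 3" using B0 by (simp add: field_simps)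
        moreover have "norm (inner (s (d m)) w - inner (s (d n)) w) < e/3" using N[OF mn] .
        ultimately show "norm (inner (s (d m)) v - inner (s (d n)) v) < e"
          unfolding eq real_norm_def by linarith
      qed
    qed
    then show ?thesis using Cauchy_convergent_iff by blast
  qed
  have subM: "subspace M" unfolding M_def V_def by (intro subspace_closure_aux subspace_span)
  have clM: "closed M" unfolding M_def by simp
  have sM: "s n \<in> M" for n
  proof -
    have "s n \<in> span (range s)" by (rule span_base) simp
    then show ?thesis unfolding M_def V_def using closure_subset by blast
  qed
  have call: "convergent (\<lambda>n. inner (s (d n)) v)" for v
  proof -
    obtain p where pM: "p \<in> M" and orth: "\<And>m. m \<in> M \<Longrightarrow> inner (v - p) m = 0"
      using proj_subspace[OF subM clM, of v] by blast
    have "inner (s (d n)) v = inner (s (d n)) p" for n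
      using orth[OF sM[of "d n"]] by (simp add: inner_commute inner_diff_left)
    then show ?thesis using cM[OF pM] by simp
  qed
  define L where "L v = lim (\<lambda>n. inner (s (d n)) v)" for v
  have Lt: "(\<lambda>n. inner (s (d n)) v) \<longlonglongrightarrow> L v" for v
    using call[of v] unfolding L_def by (simp add: convergent_LIMSEQ_iff)
  have bl: "bounded_linear L"
  proof (rule bounded_linear_intro[where K = B])
    fix x y
    have "(\<lambda>n. inner (s (d n)) (x + y)) \<longlonglongrightarrow> L x + L y"
      using tendsto_add[OF Lt[of x] Lt[of y]] by (simp add: inner_add_right)
    then show "L (x + y) = L x + L y" using Lt[of "x+y"] LIMSEQ_unique by blast
  next
    fix c x
    have "(\<lambda>n. inner (s (d n)) (c *\<^sub>R x)) \<longlonglongrightarrow> c *\<^sub>R L x"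
      using tendsto_mult[OF tendsto_const[of c] Lt[of x]] by simp
    then show "L (c *\<^sub>R x) = c *\<^sub>R L x" using Lt[of "c *\<^sub>R x"] LIMSEQ_unique by blast
  next
    fix x
    have "(\<lambda>n. \<bar>inner (s (d n)) x\<bar>) \<longlonglongrightarrow> \<bar>L x\<bar>" by (intro tendsto_intros Lt)
    then have "\<bar>L x\<bar> \<le> B * norm x" using ib by (intro Lim_bounded[where M=0]) auto
    then show "norm (L x) \<le> norm x * B" by (simp add: mult.commute)
  qed
  obtain u where u: "\<And>h. L h = inner h u" using riesz[OF bl] by blast
  show ?thesis
    using subseq Lt u by (intro exI[of _ d] exI[of _ u]) (auto simp: inner_commute)
qed


lemma decr_within:
  fixes \<phi> :: "real \<Rightarrow> real"
  assumes ab: "a \<le> b" and d: "\<And>t. t \<ge> a \<Longrightarrow> (\<phi> has_real_derivative \<phi>' t) (at t within {a..})"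
    and n: "\<And>t. t \<ge> a \<Longrightarrow> \<phi>' t \<le> 0"
  shows "\<phi> b \<le> \<phi> a"
proof -
  have "\<exists>x\<in>{a..b}. \<phi> b - \<phi> a = (\<lambda>h. \<phi>' x * h) (b - a)"
  proof (rule mvt_very_simple[OF ab])
    fix x assume "a \<le> x" "x \<le> b"
    then show "(\<phi> has_derivative (\<lambda>h. \<phi>' x * h)) (at x within {a..b})"
      using d[of x] unfolding has_field_derivative_def
      by (meson atLeastAtMost_iff atLeast_iff has_derivative_subset subsetI)
  qed
  then obtain c where "c \<in> {a..b}" "\<phi> b - \<phi> a = \<phi>' c * (b - a)" by auto
  moreover have "\<phi>' c * (b - a) \<le> 0" using n[of c] ab \<open>c \<in> {a..b}\<close>
    by (simp add: mult_nonpos_nonneg)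
  ultimately show ?thesis by simp
qed

lemma at_Ici_eq:
  fixes t t0 :: real
  assumes "t \<ge> t0"
  shows "at t within {t0..} = at t within {t0..t+1}"
  by (rule at_within_nhd[where S = "{..<t+1}"]) (use assms in auto)

lemma at_Ici_nbot:
  fixes t t0 :: real
  assumes "t \<ge> t0"
  shows "at t within {t0..} \<noteq> bot"
proof -
  have "t islimpt {t0..t+1}" using assms by simp
  then have "t islimpt {t0..}" by (rule islimpt_subset) auto
  then show ?thesis using trivial_limit_within by blast
qed

lemma grad_ineq:
  fixes f :: "'a::real_inner \<Rightarrow> real"
  assumes cf: "convex_on UNIV f"
    and fg: "\<And>u. (f has_derivative (\<lambda>h. gradf u \<bullet> h)) (at u)"
  shows "f v \<ge> f u + gradf u \<bullet> (v - u)"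
proof -
  define \<phi> where "\<phi> s = f (u + s *\<^sub>R (v - u))" for s :: real
  have d: "(\<phi> has_real_derivative gradf u \<bullet> (v - u)) (at 0)"
  proof -
    have l: "((\<lambda>s. u + s *\<^sub>R (v - u)) has_derivative (\<lambda>h. h *\<^sub>R (v - u))) (at 0)"
      by (auto intro!: derivative_eq_intros)
    have "(\<phi> has_derivative (\<lambda>h. gradf u \<bullet> (h *\<^sub>R (v - u)))) (at 0)"
      unfolding \<phi>_def using has_derivative_compose[OF l fg[of "u + 0 *\<^sub>R (v - u)"]] by simp
    then show ?thesis unfolding has_field_derivative_def
      by (rule has_derivative_eq_rhs) (auto simp: fun_eq_iff)
  qed
  have q: "((\<lambda>s. (\<phi> s - \<phi> 0) / (s - 0)) \<longlongrightarrow> gradf u \<bullet> (v - u)) (at_right 0)"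
    using d unfolding has_field_derivative_iff
    by (rule filterlim_mono) (auto simp: at_within_le_at)
  have ev: "eventually (\<lambda>s. (\<phi> s - \<phi> 0) / (s - 0) \<le> f v - f u) (at_right 0)"
    unfolding eventually_at_right_field
  proof (intro exI[of _ 1] conjI allI impI)
    fix s :: real assume s0: "0 < s" and s1: "s < 1"
    note s = s0 s1
    have "\<phi> s = f ((1 - s) *\<^sub>R u + s *\<^sub>R v)" by (simp add: \<phi>_def algebra_simps)
    also have "\<dots> \<le> (1 - s) * f u + s * f v"
      using s cf by (intro convex_onD) auto
    finally have "\<phi> s - \<phi> 0 \<le> s * (f v - f u)" by (simp add: \<phi>_def algebra_simps)
    then show "(\<phi> s - \<phi> 0) / (s - 0) \<le> f v - f u" using s by (simp add: divide_le_eq mult.commute)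
  qed simp
  have "gradf u \<bullet> (v - u) \<le> f v - f u"
    using tendsto_le[OF _ tendsto_const q ev] by simp
  then show ?thesis by simp
qed


locale sett =
  fixes f :: "'a::{real_inner, complete_space} \<Rightarrow> real"
    and gradf :: "'a \<Rightarrow> 'a"
    and t0 q p \<gamma> :: real
    and x x' x'' :: "real \<Rightarrow> 'a"
    and lam lam' :: "real \<Rightarrow> real"
    and tau dtau ddtau :: "real \<Rightarrow> real"
  assumes f_convex: "convex_on UNIV f"
    and f_grad: "\<And>u. (f has_derivative (\<lambda>h. gradf u \<bullet> h)) (at u)"
    and S_ne: "\<exists>z. \<forall>y. f z \<le> f y"
    and t0_pos: "t0 > 0" and q_pos: "q > 0" and p_ge: "p \<ge> 1" and gamma_gt: "\<gamma> > 1"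
    and x_d1: "\<And>t. t \<ge> t0 \<Longrightarrow> (x has_vector_derivative x' t) (at t within {t0..})"
    and x_d2: "\<And>t. t \<ge> t0 \<Longrightarrow> (x' has_vector_derivative x'' t) (at t within {t0..})"
    and lam_pos: "\<And>t. t \<ge> t0 \<Longrightarrow> lam t > 0"
    and lam_d: "\<And>t. t \<ge> t0 \<Longrightarrow> (lam has_real_derivative lam' t) (at t within {t0..})"
    and tau_def: "\<And>t. tau t = (1 / q powr q) *
          (t0 + integral {t0..t} (\<lambda>r. lam r powr (1 / q))) powr q"
    and tau_d1: "\<And>t. t \<ge> t0 \<Longrightarrow> (tau has_real_derivative dtau t) (at t within {t0..})"
    and tau_d2: "\<And>t. t \<ge> t0 \<Longrightarrow> (dtau has_real_derivative ddtau t) (at t within {t0..})"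
    and ode: "\<And>t. t \<ge> t0 \<Longrightarrow>
          x'' t + (((1 + \<gamma>) * (dtau t)\<^sup>2 - tau t * ddtau t) / (tau t * dtau t)) *\<^sub>R x' t
          + (\<gamma> * (dtau t)\<^sup>2 / tau t) *\<^sub>R gradf (x t + ((1 / \<gamma>) * (tau t / dtau t)) *\<^sub>R x' t) = 0"
    and coupling: "\<And>t. t \<ge> t0 \<Longrightarrow>
          lam t powr p * \<bar>dtau t\<bar> powr (p - 1) *
          (if p = 1 then 1
           else norm (gradf (x t + ((1 / \<gamma>) * (tau t / dtau t)) *\<^sub>R x' t)) powr (p - 1)) = 1"
begin

definition Lam where "Lam t = t0 + integral {t0..t} (\<lambda>r. lam r powr (1 / q))"

lemma lam_cont: "continuous_on {t0..} lam"
  unfolding continuous_on_eq_continuous_within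
  using lam_d DERIV_continuous by blast

lemma g_cont: "continuous_on {t0..} (\<lambda>r. lam r powr (1 / q))"
  apply (intro continuous_intros lam_cont) using lam_pos by fastforce+

lemma Lam_deriv:
  assumes "t \<ge> t0"
  shows "(Lam has_real_derivative lam t powr (1 / q)) (at t within {t0..})"
proof -
  have "((\<lambda>s. integral {t0..s} (\<lambda>r. lam r powr (1 / q))) has_real_derivative lam t powr (1 / q)) (at t within {t0..t+1})"
    using assms by (intro integral_has_real_derivative continuous_on_subset[OF g_cont]) auto
  then have "((\<lambda>s. integral {t0..s} (\<lambda>r. lam r powr (1 / q))) has_real_derivative lam t powr (1 / q)) (at t within {t0..})"
    using at_Ici_eq[OF assms] by simp
  then show ?thesis unfolding Lam_def[abs_def] by (auto intro!: derivative_eq_intros)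
qed

lemma Lam_ge: "t \<ge> t0 \<Longrightarrow> Lam t \<ge> t0"
proof -
  assume t: "t \<ge> t0"
  have "continuous_on {t0..t} (\<lambda>r. lam r powr (1 / q))"
    by (rule continuous_on_subset[OF g_cont]) auto
  then have "0 \<le> integral {t0..t} (\<lambda>r. lam r powr (1 / q))"
    by (intro integral_nonneg integrable_continuous_real) auto
  then show ?thesis by (simp add: Lam_def)
qed

lemma Lam_pos: "t \<ge> t0 \<Longrightarrow> Lam t > 0"
  using Lam_ge t0_pos by force

lemma tau_Lam: "tau t = Lam t powr q / q powr q"
  by (simp add: tau_def Lam_def)

lemma tau_deriv:
  assumes "t \<ge> t0"
  shows "(tau has_real_derivative (q * Lam t powr (q - 1) * lam t powr (1 / q) / q powr q)) (at t within {t0..})"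
proof -
  have L: "Lam t > 0" using Lam_pos assms .
  have "((\<lambda>s. Lam s powr q / q powr q) has_real_derivative (q * Lam t powr (q - 1) * lam t powr (1 / q) / q powr q)) (at t within {t0..})"
    using Lam_deriv[OF assms] L q_pos by (auto intro!: derivative_eq_intros)
  then show ?thesis unfolding tau_Lam[abs_def] .
qed

lemma dtau_eq: "t \<ge> t0 \<Longrightarrow> dtau t = q * Lam t powr (q - 1) * lam t powr (1 / q) / q powr q"
  using has_field_derivative_unique[OF tau_d1 tau_deriv at_Ici_nbot] by blast

lemma tau_pos: "t \<ge> t0 \<Longrightarrow> tau t > 0"
  using Lam_pos[of t] q_pos by (simp add: tau_Lam)

lemma dtau_pos: "t \<ge> t0 \<Longrightarrow> dtau t > 0"
  using Lam_pos[of t] q_pos lam_pos[of t] by (simp add: dtau_eq)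

end


context sett begin

definition y where "y t = x t + ((1 / \<gamma>) * (tau t / dtau t)) *\<^sub>R x' t"

lemma gpos: "\<gamma> > 0" using gamma_gt by simp

lemma y_deriv:
  assumes t: "t \<ge> t0"
  shows "(y has_vector_derivative (- dtau t *\<^sub>R gradf (y t))) (at t within {t0..})"
proof -
  have tp: "tau t > 0" and dp: "dtau t > 0" using tau_pos dtau_pos t by auto
  have g: "\<gamma> > 0" by (rule gpos)
  define b where "b = (\<lambda>s. (1/\<gamma>) * (tau s / dtau s))"
  define b' where "b' = (1/\<gamma>) * ((dtau t * dtau t - tau t * ddtau t) / (dtau t * dtau t))"
  have bd: "(b has_real_derivative b') (at t within {t0..})"
    unfolding b_def b'_def using tau_d1[OF t] tau_d2[OF t] dp g
    by (auto intro!: derivative_eq_intros simp: field_simps)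
  have yb: "y = (\<lambda>s. x s + b s *\<^sub>R x' s)" by (simp add: fun_eq_iff y_def b_def)
  have yd: "(y has_vector_derivative (x' t + (b t *\<^sub>R x'' t + b' *\<^sub>R x' t))) (at t within {t0..})"
    unfolding yb by (intro has_vector_derivative_add x_d1 has_vector_derivative_scaleR bd x_d2 t)
  define A where "A = ((1 + \<gamma>) * (dtau t)\<^sup>2 - tau t * ddtau t) / (tau t * dtau t)"
  define Bc where "Bc = \<gamma> * (dtau t)\<^sup>2 / tau t"
  define G where "G = gradf (y t)"
  have od: "x'' t + A *\<^sub>R x' t + Bc *\<^sub>R G = 0"
    using ode[OF t] unfolding A_def Bc_def G_def y_def .
  then have x2: "x'' t = - (A *\<^sub>R x' t) - Bc *\<^sub>R G"
    by (simp add: eq_neg_iff_add_eq_0 algebra_simps)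
  have c1: "1 + b' - b t * A = 0"
    using tp dp g unfolding b_def b'_def A_def by (simp add: field_simps power2_eq_square)
  have c2: "b t * Bc = dtau t"
    using tp dp g unfolding b_def Bc_def by (simp add: field_simps power2_eq_square)
  have "x' t + (b t *\<^sub>R x'' t + b' *\<^sub>R x' t) = (1 + b' - b t * A) *\<^sub>R x' t - (b t * Bc) *\<^sub>R G"
    unfolding x2 by (simp add: algebra_simps)
  also have "\<dots> = - dtau t *\<^sub>R gradf (y t)" using c1 c2 by (simp add: G_def)
  finally show ?thesis using yd by simp
qed

lemma x'_eq:
  assumes t: "t \<ge> t0"
  shows "x' t = (\<gamma> * dtau t / tau t) *\<^sub>R (y t - x t)"
  using tau_pos[OF t] dtau_pos[OF t] gpos by (simp add: y_def)

end


lemma decr2: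
  fixes \<phi> :: "real \<Rightarrow> real"
  assumes ab: "a \<le> b" and ca: "c \<le> a"
    and d: "\<And>t. t \<ge> a \<Longrightarrow> (\<phi> has_real_derivative \<phi>' t) (at t within {c..})"
    and n: "\<And>t. t \<ge> a \<Longrightarrow> \<phi>' t \<le> 0"
  shows "\<phi> b \<le> \<phi> a"
  by (rule decr_within[OF ab _ n]) (use d ca in \<open>auto intro: DERIV_subset\<close>)

context sett begin

lemma chain_f:
  assumes "(u has_vector_derivative u') (at t within S)"
  shows "((\<lambda>s. f (u s)) has_real_derivative (gradf (u t) \<bullet> u')) (at t within S)"
proof -
  have "(u has_derivative (\<lambda>h. h *\<^sub>R u')) (at t within S)"
    using assms by (simp add: has_vector_derivative_def)
  from has_derivative_compose[OF this f_grad]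
  have "((\<lambda>s. f (u s)) has_derivative (\<lambda>h. gradf (u t) \<bullet> (h *\<^sub>R u'))) (at t within S)" .
  then show ?thesis unfolding has_field_derivative_def
    by (rule has_derivative_eq_rhs) (auto simp: fun_eq_iff)
qed

lemma chain_sq:
  assumes "(u has_vector_derivative u') (at t within S)"
  shows "((\<lambda>s. (u s - z) \<bullet> (u s - z) / 2) has_real_derivative ((u t - z) \<bullet> u')) (at t within S)"
proof -
  have d: "((\<lambda>s. u s - z) has_vector_derivative u') (at t within S)"
    using assms by (auto intro!: derivative_eq_intros)
  have "((\<lambda>s. (u s - z) \<bullet> (u s - z)) has_vector_derivative ((u t - z) \<bullet> u' + u' \<bullet> (u t - z))) (at t within S)"
    by (rule bounded_bilinear.has_vector_derivative[OF bounded_bilinear_inner d d])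
  then have "((\<lambda>s. (u s - z) \<bullet> (u s - z)) has_real_derivative (2 * ((u t - z) \<bullet> u'))) (at t within S)"
    by (simp add: has_real_derivative_iff_has_vector_derivative inner_commute)
  then show ?thesis by (auto intro!: derivative_eq_intros)
qed

definition zm where "zm = (SOME z. \<forall>y. f z \<le> f y)"

lemma zm_min: "f zm \<le> f w"
  using someI_ex[OF S_ne] unfolding zm_def by blast

lemma INF_eq: "(INF y. f y) = f zm"
  by (rule cInf_eq_minimum) (auto simp: zm_min)

definition G where "G t = gradf (y t)"

lemma gi_min:
  assumes zS: "\<forall>w. f z \<le> f w"
  shows "(y t - z) \<bullet> G t \<ge> f (y t) - f z"
  using grad_ineq[OF f_convex f_grad, where u="y t" and v=z] unfolding G_def
  by (simp add: inner_commute inner_diff_right inner_diff_left)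

lemma fy_deriv: "t \<ge> t0 \<Longrightarrow> ((\<lambda>s. f (y s)) has_real_derivative (- dtau t * (G t \<bullet> G t))) (at t within {t0..})"
  using chain_f[OF y_deriv] by (simp add: G_def)

lemma Phi_deriv: "t \<ge> t0 \<Longrightarrow> ((\<lambda>s. (y s - z) \<bullet> (y s - z) / 2) has_real_derivative (- dtau t * ((y t - z) \<bullet> G t))) (at t within {t0..})"
  using chain_sq[OF y_deriv, of t z] by (simp add: G_def)

lemma tau_mono: "t0 \<le> s \<Longrightarrow> s \<le> t \<Longrightarrow> tau s \<le> tau t"
proof -
  assume s: "t0 \<le> s" and st: "s \<le> t"
  have "- tau t \<le> - tau s"
  proof (rule decr2[OF st s, of _ "\<lambda>r. - dtau r"])
    fix r assume "r \<ge> s" then have r: "r \<ge> t0" using s by simp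
    show "((\<lambda>r. - tau r) has_real_derivative - dtau r) (at r within {t0..})"
      using tau_d1[OF r] by (rule DERIV_minus)
    show "- dtau r \<le> 0" using dtau_pos[OF r] by simp
  qed
  then show ?thesis by simp
qed

lemma fy_mono: "t0 \<le> s \<Longrightarrow> s \<le> t \<Longrightarrow> f (y t) \<le> f (y s)"
proof -
  assume s: "t0 \<le> s" and st: "s \<le> t"
  show ?thesis
  proof (rule decr2[OF st s fy_deriv])
    fix r assume "r \<ge> s" then have r: "r \<ge> t0" using s by simp
    show "- dtau r * (G r \<bullet> G r) \<le> 0" using dtau_pos[OF r] by simp
  qed (use s in auto)
qed

lemma Phi_mono:
  assumes zS: "\<forall>w. f z \<le> f w" and "t0 \<le> s" "s \<le> t"
  shows "(y t - z) \<bullet> (y t - z) / 2 \<le> (y s - z) \<bullet> (y s - z) / 2"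
proof (rule decr2[OF assms(3,2) Phi_deriv])
  fix r assume r: "r \<ge> s"
  have "0 \<le> f (y r) - f z" using zS by simp
  also have "\<dots> \<le> (y r - z) \<bullet> G r" by (rule gi_min[OF zS])
  finally show "- dtau r * ((y r - z) \<bullet> G r) \<le> 0"
    using dtau_pos[of r] r assms(2) by (simp add: mult_nonneg_nonneg)
qed (use assms in auto)

definition En where "En z t = tau t * (f (y t) - f z) + (y t - z) \<bullet> (y t - z) / 2"

lemma En_deriv:
  assumes zS: "\<forall>w. f z \<le> f w" and t: "t \<ge> t0"
  shows "((En z) has_real_derivative (dtau t * (f (y t) - f z) + tau t * (- dtau t * (G t \<bullet> G t)) - dtau t * ((y t - z) \<bullet> G t))) (at t within {t0..})"
  unfolding En_def[abs_def]
  by (rule DERIV_cong[OF DERIV_add[OF DERIV_mult[OF tau_d1[OF t] DERIV_diff[OF fy_deriv[OF t] DERIV_const]] Phi_deriv[OF t, of z]]])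
    (simp add: algebra_simps)

lemma En_deriv_le:
  assumes zS: "\<forall>w. f z \<le> f w" and t: "t \<ge> t0"
  shows "dtau t * (f (y t) - f z) + tau t * (- dtau t * (G t \<bullet> G t)) - dtau t * ((y t - z) \<bullet> G t)
         \<le> - (tau t * dtau t * (G t \<bullet> G t))"
proof -
  have "dtau t * (f (y t) - f z) \<le> dtau t * ((y t - z) \<bullet> G t)"
    using gi_min[OF zS] dtau_pos[OF t] by (intro mult_left_mono) auto
  moreover have "tau t * (- dtau t * (G t \<bullet> G t)) = - (tau t * dtau t * (G t \<bullet> G t))" by simp
  ultimately show ?thesis by linarith
qed

lemma En_mono:
  assumes zS: "\<forall>w. f z \<le> f w" and "t0 \<le> s" "s \<le> t"
  shows "En z t \<le> En z s"
proof (rule decr2[OF assms(3,2) En_deriv[OF zS]])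
  fix r assume r: "r \<ge> s"
  have "0 \<le> tau r * dtau r * (G r \<bullet> G r)"
    using tau_pos[of r] dtau_pos[of r] r assms by simp
  then show "dtau r * (f (y r) - f z) + tau r * (- dtau r * (G r \<bullet> G r)) - dtau r * ((y r - z) \<bullet> G r) \<le> 0"
    using En_deriv_le[OF zS, of r] r assms by linarith
qed (use assms in auto)

lemma En_nonneg:
  assumes zS: "\<forall>w. f z \<le> f w" and "t \<ge> t0"
  shows "En z t \<ge> 0"
  using tau_pos[OF assms(2)] zS[rule_format, of "y t"] unfolding En_def
  by (simp add: add_nonneg_nonneg)

lemma fy_bound:
  assumes zS: "\<forall>w. f z \<le> f w" and "t \<ge> t0"
  shows "tau t * (f (y t) - f z) \<le> En z t0"
proof -
  have "tau t * (f (y t) - f z) \<le> En z t" unfolding En_def by simp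
  also have "\<dots> \<le> En z t0" using En_mono[OF zS] assms by auto
  finally show ?thesis .
qed

lemma psi_mono:
  assumes zS: "\<forall>w. f z \<le> f w" and s: "t0 \<le> s" and st: "s \<le> t"
  shows "(tau t - tau s) * (f (y t) - f z) \<le> (y s - z) \<bullet> (y s - z) / 2 - (y t - z) \<bullet> (y t - z) / 2"
proof -
  define \<psi> where "\<psi> r = (tau r - tau s) * (f (y r) - f z) + (y r - z) \<bullet> (y r - z) / 2" for r
  have "\<psi> t \<le> \<psi> s"
  proof (rule decr2[OF st s])
    fix r assume r: "r \<ge> s"
    then have rt: "r \<ge> t0" using s by simp
    show "(\<psi> has_real_derivative (dtau r * (f (y r) - f z) + (tau r - tau s) * (- dtau r * (G r \<bullet> G r)) - dtau r * ((y r - z) \<bullet> G r))) (at r within {t0..})"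
      unfolding \<psi>_def[abs_def]
      by (rule DERIV_cong[OF DERIV_add[OF DERIV_mult[OF DERIV_diff[OF tau_d1[OF rt] DERIV_const] DERIV_diff[OF fy_deriv[OF rt] DERIV_const]] Phi_deriv[OF rt, of z]]])
        (simp add: algebra_simps)
    have a: "dtau r * (f (y r) - f z) \<le> dtau r * ((y r - z) \<bullet> G r)"
      using gi_min[OF zS] dtau_pos[OF rt] by (intro mult_left_mono) auto
    have b: "0 \<le> (tau r - tau s) * (dtau r * (G r \<bullet> G r))"
      using tau_mono[OF s r] dtau_pos[OF rt] by simp
    show "dtau r * (f (y r) - f z) + (tau r - tau s) * (- dtau r * (G r \<bullet> G r)) - dtau r * ((y r - z) \<bullet> G r) \<le> 0"
      using a b by (simp only: mult_minus_right mult_minus_left)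
  qed
  then show ?thesis unfolding \<psi>_def by simp
qed

end


lemma amgm:
  fixes k w :: real
  assumes k: "0 < k" and w: "0 < w"
  shows "1 + k \<le> k * w + w powr (-k)"
proof -
  have e: "w powr (-k) = exp (-k * ln w)" using w by (simp add: powr_def)
  have "1 + (-k * ln w) \<le> exp (-k * ln w)" by (rule exp_ge_add_one_self)
  moreover have "ln w \<le> w - 1" by (rule ln_le_minus_one[OF w])
  then have "-k * (w - 1) \<le> -k * ln w" using k by simp
  ultimately show ?thesis unfolding e by (simp add: algebra_simps)
qed

context sett begin

definition kap where "kap = (p - 1) / (p - 1 + 2 * p * q)"

lemma den_pos: "p > 1 \<Longrightarrow> p - 1 + 2 * p * q > 0"
  using q_pos by (smt (verit) mult_pos_pos)
lemma kap_pos: "p > 1 \<Longrightarrow> 0 < kap" using den_pos by (simp add: kap_def)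
lemma kap_lt1: "p > 1 \<Longrightarrow> kap < 1"
proof -
  assume p1: "p > 1"
  have "p - 1 < p - 1 + 2 * p * q" using q_pos p1 by (smt (verit) mult_pos_pos)
  then show ?thesis using den_pos[OF p1] by (simp add: kap_def)
qed
lemma kap_id: "p > 1 \<Longrightarrow> kap * (1 / q + 2 * p / (p - 1)) = 1 / q"
proof -
  assume p1: "p > 1"
  have D: "p - 1 + 2 * p * q \<noteq> 0" using den_pos[OF p1] by simp
  have "1 / q + 2 * p / (p - 1) = (p - 1 + 2 * p * q) / (q * (p - 1))"
    using q_pos p1 by (simp add: field_simps)
  then show ?thesis using D p1 q_pos by (simp add: kap_def)
qed
lemma kap_12: "p > 1 \<Longrightarrow> 1 + kap = 2 * (p - 1 + p * q) / (p - 1 + 2 * p * q) \<and> 1 - kap = 2 * p * q / (p - 1 + 2 * p * q)"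
proof -
  assume p1: "p > 1"
  have D: "p - 1 + 2 * p * q \<noteq> 0" using den_pos[OF p1] by simp
  show ?thesis using D by (simp add: kap_def field_simps)
qed

lemma coup1:
  assumes p1: "p > 1" and t: "t \<ge> t0"
  shows "lam t powr p * dtau t powr (p - 1) * norm (G t) powr (p - 1) = 1"
  using coupling[OF t] p1 dtau_pos[OF t] unfolding G_def y_def by simp

lemma G_pos:
  assumes p1: "p > 1" and t: "t \<ge> t0"
  shows "norm (G t) > 0"
proof (rule ccontr)
  assume "\<not> norm (G t) > 0"
  then have "norm (G t) = 0" by simp
  then show False using coup1[OF assms] by simp
qed

lemma ln_dtau: "t \<ge> t0 \<Longrightarrow> ln (dtau t) = ln q + (q - 1) * ln (Lam t) + (1 / q) * ln (lam t) - q * ln q"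
  using Lam_pos[of t] q_pos lam_pos[of t] by (simp add: dtau_eq ln_mult ln_div)

lemma ln_tau: "t \<ge> t0 \<Longrightarrow> ln (tau t) = q * ln (Lam t) - q * ln q"
  using Lam_pos[of t] q_pos by (simp add: tau_Lam ln_div)

lemma ln_G:
  assumes p1: "p > 1" and t: "t \<ge> t0"
  shows "(p - 1) * ln (norm (G t)) = - (p * ln (lam t) + (p - 1) * ln (dtau t))"
proof -
  have "ln (lam t powr p * dtau t powr (p - 1) * norm (G t) powr (p - 1)) = 0"
    using coup1[OF assms] by simp
  then show ?thesis
    using lam_pos[OF t] dtau_pos[OF t] G_pos[OF assms] by (simp add: ln_mult algebra_simps)
qed

definition X where "X t = tau t * dtau t * (G t \<bullet> G t)"

lemma X_pos: "p > 1 \<Longrightarrow> t \<ge> t0 \<Longrightarrow> X t > 0"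
  using tau_pos[of t] dtau_pos[of t] G_pos[of t] by (simp add: X_def)

lemma X_id:
  assumes p1: "p > 1" and t: "t \<ge> t0"
  shows "X t powr (- kap) = q powr kap * Lam t powr (- kap) * lam t powr (1 / q)"
proof -
  have gp: "norm (G t) > 0" by (rule G_pos[OF assms])
  have GG: "G t \<bullet> G t = (norm (G t))\<^sup>2" by (simp add: power2_norm_eq_inner)
  have lX: "ln (X t) = ln (tau t) + ln (dtau t) + 2 * ln (norm (G t))"
    using tau_pos[OF t] dtau_pos[OF t] gp unfolding X_def GG by (simp add: ln_mult ln_realpow)
  have lg: "ln (norm (G t)) = - (p * ln (lam t) + (p - 1) * ln (dtau t)) / (p - 1)"
    using ln_G[OF assms] p1 by (simp add: field_simps)
  have lX2: "ln (X t) = ln (Lam t) - ln q - (1 / q + 2 * p / (p - 1)) * ln (lam t)"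
    unfolding lX lg ln_tau[OF t] ln_dtau[OF t] using p1 q_pos
    by (simp add: field_simps)
  have "ln (X t powr (- kap)) = - kap * ln (X t)" by simp
  also have "\<dots> = kap * ln q - kap * ln (Lam t) + (kap * (1 / q + 2 * p / (p - 1))) * ln (lam t)"
    unfolding lX2 by (simp add: algebra_simps)
  also have "\<dots> = ln (q powr kap * Lam t powr (- kap) * lam t powr (1 / q))"
    unfolding kap_id[OF p1] using q_pos Lam_pos[OF t] lam_pos[OF t] by (simp add: ln_mult)
  finally have L: "ln (X t powr (- kap)) = ln (q powr kap * Lam t powr (- kap) * lam t powr (1 / q))" .
  have p1': "0 < X t powr (- kap)" using X_pos[OF assms] by simp
  have p2': "0 < q powr kap * Lam t powr (- kap) * lam t powr (1 / q)"
    using q_pos Lam_pos[OF t] lam_pos[OF t] by simp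
  show ?thesis using ln_inj_iff[OF p1' p2'] L by blast
qed

end


context sett begin

lemma powr_chain:
  fixes g :: "real \<Rightarrow> real"
  assumes d: "(g has_real_derivative g') (at t within S)" and gp: "g t > 0"
  shows "((\<lambda>s. g s powr a) has_real_derivative (a * g t powr (a - 1) * g')) (at t within S)"
proof -
  have "((\<lambda>s. s powr a) has_real_derivative (a * g t powr (a - 1))) (at (g t))"
    using has_real_derivative_powr[OF gp] by simp
  from DERIV_chain2[OF this d] show ?thesis .
qed

lemma Lpow_deriv:
  assumes t: "t \<ge> t0"
  shows "((\<lambda>s. Lam s powr (1 - kap)) has_real_derivative ((1 - kap) * Lam t powr (- kap) * lam t powr (1 / q))) (at t within {t0..})"
  using powr_chain[OF Lam_deriv[OF t] Lam_pos[OF t], of "1 - kap"] by simp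

lemma key_ineq:
  assumes p1: "p > 1" and e: "\<epsilon> > 0" and t: "t \<ge> t0"
  shows "t - t0 \<le> (kap / (1 + kap)) * \<epsilon> * En zm t0
           + (1 - kap / (1 + kap)) * \<epsilon> powr (- kap) * q powr kap * Lam t powr (1 - kap) / (1 - kap)"
proof -
  define \<theta> where "\<theta> = kap / (1 + kap)"
  define c where "c = (1 - \<theta>) * \<epsilon> powr (- kap) * q powr kap / (1 - kap)"
  have k0: "0 < kap" and k1: "kap < 1" using kap_pos[OF p1] kap_lt1[OF p1] by auto
  have th: "0 < \<theta>" "\<theta> < 1" "1 - \<theta> = 1 / (1 + kap)" using k0 by (auto simp: \<theta>_def field_simps)
  have zS: "\<forall>w. f zm \<le> f w" using zm_min by blast
  define E' where "E' r = dtau r * (f (y r) - f zm) + tau r * (- dtau r * (G r \<bullet> G r)) - dtau r * ((y r - zm) \<bullet> G r)" for r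
  define \<phi> where "\<phi> r = (r - t0) + \<theta> * \<epsilon> * En zm r - c * Lam r powr (1 - kap)" for r
  have "\<phi> t \<le> \<phi> t0"
  proof (rule decr2[OF t order_refl])
    fix r assume r: "r \<ge> t0"
    show "(\<phi> has_real_derivative (1 + \<theta> * \<epsilon> * E' r - c * ((1 - kap) * Lam r powr (- kap) * lam r powr (1 / q)))) (at r within {t0..})"
      unfolding \<phi>_def[abs_def] E'_def
      by (rule DERIV_cong[OF DERIV_diff[OF DERIV_add[OF DERIV_diff[OF DERIV_ident DERIV_const]
            DERIV_cmult[OF En_deriv[OF zS r]]] DERIV_cmult[OF Lpow_deriv[OF r]]]]) simp
    have Xp: "X r > 0" by (rule X_pos[OF p1 r])
    have E'le: "E' r \<le> - X r" unfolding E'_def X_def by (rule En_deriv_le[OF zS r])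
    have "c * ((1 - kap) * Lam r powr (- kap) * lam r powr (1 / q))
          = (1 - \<theta>) * \<epsilon> powr (- kap) * (q powr kap * Lam r powr (- kap) * lam r powr (1 / q))"
      using k1 by (simp add: c_def field_simps)
    also have "\<dots> = (1 - \<theta>) * (\<epsilon> * X r) powr (- kap)"
      unfolding X_id[OF p1 r, symmetric] by (simp add: powr_mult)
    finally have ceq: "c * ((1 - kap) * Lam r powr (- kap) * lam r powr (1 / q)) = (1 - \<theta>) * (\<epsilon> * X r) powr (- kap)" .
    have am: "1 + kap \<le> kap * (\<epsilon> * X r) + (\<epsilon> * X r) powr (- kap)"
      using amgm[OF k0] e Xp by simp
    have am2: "1 \<le> \<theta> * (\<epsilon> * X r) + (1 - \<theta>) * (\<epsilon> * X r) powr (- kap)"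
    proof -
      have "1 = (1 + kap) / (1 + kap)" using k0 by simp
      also have "\<dots> \<le> (kap * (\<epsilon> * X r) + (\<epsilon> * X r) powr (- kap)) / (1 + kap)"
        using am k0 by (intro divide_right_mono) auto
      also have "\<dots> = \<theta> * (\<epsilon> * X r) + (1 - \<theta>) * (\<epsilon> * X r) powr (- kap)"
        unfolding th(3) \<theta>_def using k0 by (simp add: add_divide_distrib)
          (simp add: field_simps)
      finally show ?thesis .
    qed
    have "\<theta> * \<epsilon> * E' r \<le> \<theta> * \<epsilon> * (- X r)"
      using E'le th e by (intro mult_left_mono) auto
    then show "1 + \<theta> * \<epsilon> * E' r - c * ((1 - kap) * Lam r powr (- kap) * lam r powr (1 / q)) \<le> 0"
      unfolding ceq using am2 by (simp add: algebra_simps)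
  qed
  moreover have "0 \<le> En zm t" by (rule En_nonneg[OF zS t])
  moreover have "0 \<le> c * Lam t0 powr (1 - kap)"
  proof -
    have "0 \<le> 1 - \<theta>" "0 < 1 - kap" using th k1 k0 by auto
    then show ?thesis unfolding c_def by (intro mult_nonneg_nonneg divide_nonneg_pos) auto
  qed
  ultimately have "t - t0 \<le> \<theta> * \<epsilon> * En zm t0 + c * Lam t powr (1 - kap)"
    unfolding \<phi>_def using th e
    by (smt (verit, best) mult_nonneg_nonneg)
  then show ?thesis unfolding c_def \<theta>_def by (simp add: mult.assoc)
qed

end


context sett begin

lemma lin2: "a \<le> b + k \<Longrightarrow> b \<le> a / 2 \<Longrightarrow> a / 2 \<le> (k::real)" by linarith

lemma e_id: "p > 1 \<Longrightarrow> q * (1 + kap) / (1 - kap) = 1 + q - 1 / p"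
proof -
  assume p1: "p > 1"
  have D: "p - 1 + 2 * p * q > 0" using den_pos[OF p1] .
  have "q * (1 + kap) / (1 - kap) = q * (2 * (p - 1 + p * q) / (p - 1 + 2 * p * q)) / (2 * p * q / (p - 1 + 2 * p * q))"
    using kap_12[OF p1] by simp
  also have "\<dots> = 1 + q - 1 / p"
  proof -
    have l: "(1 + q - 1 / p) * (2 * p * q) = q * (2 * (p - 1 + p * q))"
      using p1 by (simp add: field_simps)
    have "(1 + q - 1 / p) * (2 * p * q / (p - 1 + 2 * p * q)) = ((1 + q - 1 / p) * (2 * p * q)) / (p - 1 + 2 * p * q)"
      by simp
    also have "\<dots> = q * (2 * (p - 1 + p * q) / (p - 1 + 2 * p * q))" unfolding l by simp
    finally have "(1 + q - 1 / p) * (2 * p * q / (p - 1 + 2 * p * q)) = q * (2 * (p - 1 + p * q) / (p - 1 + 2 * p * q))" .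
    moreover have "2 * p * q / (p - 1 + 2 * p * q) \<noteq> 0" using D q_pos p1 by simp
    ultimately show ?thesis by (simp only: \<open>(1 + q - 1 / p) * (2 * p * q / (p - 1 + 2 * p * q)) = q * (2 * (p - 1 + p * q) / (p - 1 + 2 * p * q))\<close>[symmetric]) simp
  qed
  finally show ?thesis .
qed

lemma tau_lower_gt1:
  assumes p1: "p > 1"
  shows "\<exists>C>0. \<forall>t\<ge>t0. tau t \<ge> C * (t - t0) powr (1 + q - 1 / p)"
proof -
  define \<theta> where "\<theta> = kap / (1 + kap)"
  have k0: "0 < kap" and k1: "kap < 1" using kap_pos[OF p1] kap_lt1[OF p1] by auto
  have th: "0 < \<theta>" "\<theta> < 1" using k0 by (auto simp: \<theta>_def field_simps)
  have zS: "\<forall>w. f zm \<le> f w" using zm_min by blast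
  define E1 where "E1 = En zm t0 + 1"
  have E0: "En zm t0 \<ge> 0" using En_nonneg[OF zS] by simp
  have E1p: "E1 > 0" using E0 by (simp add: E1_def)
  define A where "A = - ln 2 - ln (1 - \<theta>) - kap * ln (2 * \<theta> * E1) - kap * ln q + ln (1 - kap)"
  define B where "B = q * A / (1 - kap) - q * ln q"
  define e where "e = 1 + q - 1 / p"
  have eid: "q * (1 + kap) / (1 - kap) = e" unfolding e_def by (rule e_id[OF p1])
  show ?thesis
  proof (intro exI[of _ "exp B"] conjI allI impI)
    show "0 < exp B" by simp
    fix t assume t: "t \<ge> t0"
    show "exp B * (t - t0) powr (1 + q - 1 / p) \<le> tau t"
    proof (cases "t = t0")
      case True then show ?thesis using tau_pos[OF t] by simp
    next
      case False
      then have tt: "t - t0 > 0" using t by simp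
      define \<epsilon> where "\<epsilon> = (t - t0) / (2 * \<theta> * E1)"
      have ep: "\<epsilon> > 0" using tt th E1p by (simp add: \<epsilon>_def)
      have Lp: "Lam t > 0" by (rule Lam_pos[OF t])
      have ki: "t - t0 \<le> \<theta> * \<epsilon> * En zm t0 + (1 - \<theta>) * \<epsilon> powr (- kap) * q powr kap * Lam t powr (1 - kap) / (1 - kap)"
        using key_ineq[OF p1 ep t] unfolding \<theta>_def .
      have "\<theta> * \<epsilon> * En zm t0 \<le> \<theta> * \<epsilon> * E1"
        using th ep by (intro mult_left_mono) (auto simp: E1_def)
      also have "\<theta> * \<epsilon> * E1 = (t - t0) / 2" using th E1p by (simp add: \<epsilon>_def)
      finally have h0: "\<theta> * \<epsilon> * En zm t0 \<le> (t - t0) / 2" .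
      have h1: "(t - t0) / 2 \<le> (1 - \<theta>) * \<epsilon> powr (- kap) * q powr kap * Lam t powr (1 - kap) / (1 - kap)"
        by (rule lin2[OF ki h0])
      have "ln ((t - t0) / 2) \<le> ln ((1 - \<theta>) * \<epsilon> powr (- kap) * q powr kap * Lam t powr (1 - kap) / (1 - kap))"
        using h1 tt by (intro ln_mono) auto
      then have h2: "ln (t - t0) - ln 2 \<le> ln (1 - \<theta>) - kap * ln \<epsilon> + kap * ln q + (1 - kap) * ln (Lam t) - ln (1 - kap)"
        using tt th k1 ep q_pos Lp by (simp add: ln_mult ln_div)
      have le: "ln \<epsilon> = ln (t - t0) - ln (2 * \<theta> * E1)"
        using tt th E1p by (simp add: \<epsilon>_def ln_div)
      have h3: "(1 + kap) * ln (t - t0) + A \<le> (1 - kap) * ln (Lam t)"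
        using h2 unfolding le A_def by (simp add: algebra_simps)
      have h4: "q / (1 - kap) * ((1 + kap) * ln (t - t0) + A) \<le> q / (1 - kap) * ((1 - kap) * ln (Lam t))"
        using h3 q_pos k1 by (intro mult_left_mono) auto
      have "ln (exp B * (t - t0) powr e) = B + e * ln (t - t0)" using tt by (simp add: ln_mult)
      also have "\<dots> = q / (1 - kap) * ((1 + kap) * ln (t - t0) + A) - q * ln q"
        unfolding B_def eid[symmetric] by (simp add: algebra_simps add_divide_distrib)
      also have "\<dots> \<le> q / (1 - kap) * ((1 - kap) * ln (Lam t)) - q * ln q" using h4 by simp
      also have "\<dots> = ln (tau t)" using k1 ln_tau[OF t] by simp
      finally show ?thesis using tt tau_pos[OF t] by (simp add: e_def[symmetric])
    qed
  qed
qed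

lemma tau_lower_eq1:
  assumes p1: "p = 1"
  shows "\<exists>C>0. \<forall>t\<ge>t0. tau t \<ge> C * (t - t0) powr (1 + q - 1 / p)"
proof -
  have lam1: "lam r = 1" if r: "r \<ge> t0" for r
    using coupling[OF r] p1 lam_pos[OF r] dtau_pos[OF r] by simp
  have Lt: "Lam t = t" if t: "t \<ge> t0" for t
  proof -
    have "integral {t0..t} (\<lambda>r. lam r powr (1 / q)) = integral {t0..t} (\<lambda>r. 1)"
      by (rule integral_cong) (simp add: lam1)
    then show ?thesis using t by (simp add: Lam_def)
  qed
  show ?thesis
  proof (intro exI[of _ "1 / q powr q"] conjI allI impI)
    show "0 < 1 / q powr q" using q_pos by simp
    fix t assume t: "t \<ge> t0"
    have "(t - t0) powr q \<le> t powr q" using t t0_pos q_pos by (intro powr_mono2) auto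
    then show "1 / q powr q * (t - t0) powr (1 + q - 1 / p) \<le> tau t"
      using p1 q_pos unfolding tau_Lam Lt[OF t] by (simp add: divide_right_mono)
  qed
qed

lemma tau_lower: "\<exists>C>0. \<forall>t\<ge>t0. tau t \<ge> C * (t - t0) powr (1 + q - 1 / p)"
  using tau_lower_gt1 tau_lower_eq1 p_ge by fastforce

end


context sett begin

definition ee where "ee = 1 + q - 1 / p"

lemma ee_pos: "ee > 0"
proof -
  have "1 / p \<le> 1" using p_ge by simp
  then show ?thesis using q_pos by (simp add: ee_def)
qed

lemma tau_inf: "filterlim tau at_top at_top"
proof -
  obtain C where C: "C > 0" and Ct: "\<And>t. t \<ge> t0 \<Longrightarrow> tau t \<ge> C * (t - t0) powr ee"
    using tau_lower unfolding ee_def by blast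
  show ?thesis unfolding filterlim_at_top eventually_at_top_linorder
  proof (intro allI)
   fix Z
   show "\<exists>N. \<forall>n\<ge>N. Z \<le> tau n"
   proof (intro exI[of _ "t0 + (max Z 1 / C) powr (1 / ee)"] allI impI) 
    fix t assume t: "t \<ge> t0 + (max Z 1 / C) powr (1 / ee)"
    have tt: "t \<ge> t0" using t by (smt (verit) powr_ge_zero)
    have "((max Z 1 / C) powr (1 / ee)) powr ee \<le> (t - t0) powr ee"
      using t ee_pos by (intro powr_mono2) auto
    also have "((max Z 1 / C) powr (1 / ee)) powr ee = max Z 1 / C"
      using ee_pos C by (simp add: powr_powr)
    finally have "max Z 1 \<le> C * (t - t0) powr ee" using C by (simp add: field_simps)
    then show "Z \<le> tau t" using Ct[OF tt] by simp
   qed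
  qed
qed

lemma eventually_tau_ge: "eventually (\<lambda>t. t \<ge> t0) at_top"
  by (rule eventually_ge_at_top)

lemma fy_rate: "((\<lambda>t. tau t * (f (y t) - f zm)) \<longlongrightarrow> 0) at_top"
proof (rule order_tendstoI)
  fix a :: real assume "a < 0"
  show "eventually (\<lambda>t. a < tau t * (f (y t) - f zm)) at_top"
    using eventually_ge_at_top[of t0]
  proof eventually_elim
    case (elim t) then show ?case using tau_pos[of t] zm_min[of "y t"] \<open>a < 0\<close>
      by (smt (verit) mult_nonneg_nonneg)
  qed
next
  fix \<epsilon> :: real assume e: "0 < \<epsilon>"
  have zS: "\<forall>w. f zm \<le> f w" using zm_min by blast
  define Ph where "Ph r = (y r - zm) \<bullet> (y r - zm) / 2" for r
  define I where "I = Inf (Ph ` {t0..})"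
  have bdd: "bdd_below (Ph ` {t0..})" by (rule bdd_belowI[of _ 0]) (auto simp: Ph_def)
  have "I < I + \<epsilon> / 2" using e by simp
  then obtain s where s: "s \<ge> t0" and Ps: "Ph s < I + \<epsilon> / 2"
    unfolding I_def by (subst (asm) cInf_less_iff) (use bdd in auto)
  have PI: "I \<le> Ph r" if "r \<ge> t0" for r unfolding I_def using bdd that by (auto intro: cInf_lower)
  define E0 where "E0 = En zm t0"
  have E0: "E0 \<ge> 0" unfolding E0_def using En_nonneg[OF zS] by simp
  have ev1: "eventually (\<lambda>t. tau t > 2 * tau s * (E0 + 1) / \<epsilon>) at_top"
    using tau_inf unfolding filterlim_at_top_dense by blast
  show "eventually (\<lambda>t. tau t * (f (y t) - f zm) < \<epsilon>) at_top"
    using ev1 eventually_ge_at_top[of s]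
  proof eventually_elim
    case (elim t)
    then have ts: "t \<ge> s" and tt: "t \<ge> t0" using s by auto
    have tp: "tau t > 0" using tau_pos[OF tt] .
    have sp: "tau s > 0" using tau_pos[OF s] .
    have m1: "(tau t - tau s) * (f (y t) - f zm) \<le> Ph s - Ph t"
      using psi_mono[OF zS s ts] unfolding Ph_def .
    have m2: "Ph s - Ph t < \<epsilon> / 2" using Ps PI[OF tt] by simp
    have fb: "tau t * (f (y t) - f zm) \<le> E0" using fy_bound[OF zS tt] unfolding E0_def .
    have "tau s * (f (y t) - f zm) \<le> tau s * (E0 / tau t)"
      using fb tp sp by (intro mult_left_mono) (auto simp: field_simps)
    also have "tau s * (E0 / tau t) < \<epsilon> / 2"
    proof -
      have "2 * tau s * (E0 + 1) / \<epsilon> < tau t" using elim by simp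
      then have "2 * tau s * (E0 + 1) < \<epsilon> * tau t" using e by (simp add: field_simps)
      moreover have "2 * tau s * E0 \<le> 2 * tau s * (E0 + 1)" using sp by simp
      ultimately have "2 * tau s * E0 < \<epsilon> * tau t" by linarith
      then show ?thesis using tp by (simp add: field_simps)
    qed
    finally show ?case using m1 m2 by (simp add: algebra_simps)
  qed
qed

end


context sett begin

lemma taupow_deriv:
  assumes t: "t \<ge> t0"
  shows "((\<lambda>s. tau s powr a) has_real_derivative (a * tau t powr (a - 1) * dtau t)) (at t within {t0..})"
  using tau_d1[OF t] tau_pos[OF t]
  by (auto intro!: derivative_eq_intros simp: powr_diff field_simps)

lemma fx_step:
  assumes t: "t \<ge> t0"
  shows "\<gamma> * tau t powr (\<gamma> - 1) * dtau t * (f (x t) - f zm) + tau t powr \<gamma> * (gradf (x t) \<bullet> x' t)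
         \<le> \<gamma> * tau t powr (\<gamma> - 1) * dtau t * (f (y t) - f zm)"
proof -
  have tp: "tau t > 0" and dp: "dtau t > 0" using tau_pos[OF t] dtau_pos[OF t] by auto
  have "tau t powr \<gamma> * (gradf (x t) \<bullet> x' t) = \<gamma> * tau t powr (\<gamma> - 1) * dtau t * (gradf (x t) \<bullet> (y t - x t))"
  proof -
    have e1: "tau t powr (\<gamma> - 1) = tau t powr \<gamma> / tau t" using tp by (simp add: powr_diff)
    show ?thesis unfolding x'_eq[OF t] inner_scaleR_right e1 using tp by (simp add: field_simps)
  qed
  moreover have "gradf (x t) \<bullet> (y t - x t) \<le> f (y t) - f (x t)"
    using grad_ineq[OF f_convex f_grad, where u="x t" and v="y t"] by simp
  moreover have "0 \<le> \<gamma> * tau t powr (\<gamma> - 1) * dtau t" using gpos tp dp by simp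
  ultimately have "tau t powr \<gamma> * (gradf (x t) \<bullet> x' t) \<le> \<gamma> * tau t powr (\<gamma> - 1) * dtau t * (f (y t) - f (x t))"
    by (metis mult_left_mono)
  then show ?thesis by (simp add: algebra_simps)
qed

lemma fx_rate: "((\<lambda>t. tau t * (f (x t) - f zm)) \<longlongrightarrow> 0) at_top"
proof (rule order_tendstoI)
  fix a :: real assume "a < 0"
  show "eventually (\<lambda>t. a < tau t * (f (x t) - f zm)) at_top"
    using eventually_ge_at_top[of t0]
  proof eventually_elim
    case (elim t) then show ?case using tau_pos[of t] zm_min[of "x t"] \<open>a < 0\<close>
      by (smt (verit) mult_nonneg_nonneg)
  qed
next
  fix \<epsilon> :: real assume e: "0 < \<epsilon>"
  have g1: "\<gamma> - 1 > 0" using gamma_gt by simp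
  define \<epsilon>' where "\<epsilon>' = \<epsilon> * (\<gamma> - 1) / (2 * \<gamma>)"
  have e': "\<epsilon>' > 0" using e g1 gpos by (simp add: \<epsilon>'_def)
  have "eventually (\<lambda>t. tau t * (f (y t) - f zm) < \<epsilon>') at_top"
    using fy_rate e' by (rule order_tendstoD)
  then obtain T0 where T0: "\<And>t. t \<ge> T0 \<Longrightarrow> tau t * (f (y t) - f zm) < \<epsilon>'"
    unfolding eventually_at_top_linorder by blast
  define T where "T = max T0 t0"
  have T: "T \<ge> t0" "T \<ge> T0" by (auto simp: T_def)
  define h where "h r = tau r powr \<gamma> * (f (x r) - f zm)" for r
  define H where "H = h T"
  have H0: "H \<ge> 0" using tau_pos[OF T(1)] zm_min[of "x T"] by (simp add: H_def h_def)
  define c where "c = \<epsilon>' * \<gamma> / (\<gamma> - 1)"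
  have c: "c = \<epsilon> / 2" using g1 gpos by (simp add: c_def \<epsilon>'_def field_simps)
  have main: "h t \<le> H + c * tau t powr (\<gamma> - 1)" if t: "t \<ge> T" for t
  proof -
    define \<omega> where "\<omega> r = h r - c * tau r powr (\<gamma> - 1)" for r
    have "\<omega> t \<le> \<omega> T"
    proof (rule decr2[OF t T(1)])
      fix r assume r: "r \<ge> T"
      then have rt: "r \<ge> t0" using T by simp
      show "(\<omega> has_real_derivative ((\<gamma> * tau r powr (\<gamma> - 1) * dtau r * (f (x r) - f zm) + tau r powr \<gamma> * (gradf (x r) \<bullet> x' r))
              - c * ((\<gamma> - 1) * tau r powr (\<gamma> - 1 - 1) * dtau r))) (at r within {t0..})"
        unfolding \<omega>_def[abs_def] h_def
        by (rule DERIV_cong[OF DERIV_diff[OF DERIV_mult[OF taupow_deriv[OF rt] DERIV_diff[OF chain_f[OF x_d1[OF rt]] DERIV_const]]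
              DERIV_cmult[OF taupow_deriv[OF rt]]]]) simp
      have tp: "tau r > 0" and dp: "dtau r > 0" using tau_pos[OF rt] dtau_pos[OF rt] by auto
      have "f (y r) - f zm \<le> \<epsilon>' / tau r" using T0[of r] r T tp by (simp add: field_simps)
      then have "\<gamma> * tau r powr (\<gamma> - 1) * dtau r * (f (y r) - f zm) \<le> \<gamma> * tau r powr (\<gamma> - 1) * dtau r * (\<epsilon>' / tau r)"
        using gpos tp dp by (intro mult_left_mono) auto
      also have "\<dots> = c * ((\<gamma> - 1) * tau r powr (\<gamma> - 1 - 1) * dtau r)"
        using g1 tp by (simp add: c_def powr_diff field_simps power2_eq_square)
      finally show "(\<gamma> * tau r powr (\<gamma> - 1) * dtau r * (f (x r) - f zm) + tau r powr \<gamma> * (gradf (x r) \<bullet> x' r))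
              - c * ((\<gamma> - 1) * tau r powr (\<gamma> - 1 - 1) * dtau r) \<le> 0"
        using fx_step[OF rt] by linarith
    qed
    moreover have "0 \<le> c * tau T powr (\<gamma> - 1)" using e by (simp add: c)
    ultimately show ?thesis unfolding \<omega>_def H_def by linarith
  qed
  have ev: "eventually (\<lambda>t. tau t > ((2 * H + 1) / \<epsilon>) powr (1 / (\<gamma> - 1))) at_top"
    using tau_inf unfolding filterlim_at_top_dense by blast
  show "eventually (\<lambda>t. tau t * (f (x t) - f zm) < \<epsilon>) at_top"
    using ev eventually_ge_at_top[of T]
  proof eventually_elim
    case (elim t)
    then have tT: "t \<ge> T" and tt: "t \<ge> t0" using T by auto
    have tp: "tau t > 0" using tau_pos[OF tt] .
    have Kp: "(2 * H + 1) / \<epsilon> > 0" using H0 e by simp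
    have "(((2 * H + 1) / \<epsilon>) powr (1 / (\<gamma> - 1))) powr (\<gamma> - 1) < tau t powr (\<gamma> - 1)"
      using powr_less_mono2[OF g1 _ elim(1)] Kp by simp
    then have big: "(2 * H + 1) / \<epsilon> < tau t powr (\<gamma> - 1)" using g1 Kp H0 e by (simp add: powr_powr)
    have tg: "tau t powr (\<gamma> - 1) > 0" using tp by simp
    have "tau t * (f (x t) - f zm) = h t / tau t powr (\<gamma> - 1)"
      using tp by (simp add: h_def powr_diff field_simps)
    also have "\<dots> \<le> (H + c * tau t powr (\<gamma> - 1)) / tau t powr (\<gamma> - 1)"
      using main[OF tT] tg by (simp add: divide_right_mono)
    also have "\<dots> = H / tau t powr (\<gamma> - 1) + \<epsilon> / 2" using tg by (simp add: c field_simps)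
    also have "H / tau t powr (\<gamma> - 1) < \<epsilon> / 2"
    proof -
      have "2 * H + 1 < \<epsilon> * tau t powr (\<gamma> - 1)" using big e by (simp add: field_simps)
      then show ?thesis using tg e by (simp add: field_simps)
    qed
    finally show ?case by simp
  qed
qed

end


context sett begin

lemma rate_final: "(\<lambda>t. f (x t) - (INF y. f y)) \<in> o(\<lambda>t. t powr (-(1 + q - 1 / p)))"
proof (rule landau_o.smallI)
  fix c :: real assume c: "c > 0"
  obtain C where C: "C > 0" and Ct: "\<And>t. t \<ge> t0 \<Longrightarrow> tau t \<ge> C * (t - t0) powr ee"
    using tau_lower unfolding ee_def by blast
  define K where "K = c * C / 2 powr ee"
  have K: "K > 0" using c C by (simp add: K_def)
  have ev: "eventually (\<lambda>t. tau t * (f (x t) - f zm) < K) at_top"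
    using fx_rate K by (rule order_tendstoD)
  show "eventually (\<lambda>t. norm (f (x t) - (INF y. f y)) \<le> c * norm (t powr (-(1 + q - 1 / p)))) at_top"
    using ev eventually_ge_at_top[of "2 * t0"]
  proof eventually_elim
    case (elim t)
    have tt: "t \<ge> t0" and tpos: "t > 0" using elim t0_pos by auto
    have tp: "tau t > 0" using tau_pos[OF tt] .
    have fnn: "f (x t) - f zm \<ge> 0" using zm_min by simp
    have "(t / 2) powr ee \<le> (t - t0) powr ee" using elim tpos ee_pos by (intro powr_mono2) auto
    then have "C * (t powr ee / 2 powr ee) \<le> tau t"
      using Ct[OF tt] C tpos by (smt (verit) divide_powr_uminus mult_left_mono powr_divide)
    then have lb: "C * t powr ee / 2 powr ee \<le> tau t" by simp
    have "f (x t) - f zm = (tau t * (f (x t) - f zm)) / tau t" using tp by simp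
    also have "\<dots> \<le> K / tau t" using elim tp by (intro divide_right_mono) auto
    also have "\<dots> \<le> K / (C * t powr ee / 2 powr ee)"
      using lb K C tpos tp by (intro divide_left_mono) (auto intro!: mult_pos_pos)
    also have "\<dots> = c / t powr ee" using C tpos by (simp add: K_def field_simps)
    also have "\<dots> = c * t powr (-(1 + q - 1 / p))"
      unfolding powr_minus ee_def by (simp add: divide_inverse)
    finally show ?case using fnn tpos by (simp add: INF_eq)
  qed
qed

end


lemma decr_conv:
  fixes \<phi> :: "real \<Rightarrow> real"
  assumes mono: "\<And>s t. t0 \<le> s \<Longrightarrow> s \<le> t \<Longrightarrow> \<phi> t \<le> \<phi> s"
    and nn: "\<And>t. t \<ge> t0 \<Longrightarrow> 0 \<le> \<phi> t"
  shows "\<exists>L. (\<phi> \<longlongrightarrow> L) at_top"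
proof -
  define L where "L = Inf (\<phi> ` {t0..})"
  have bdd: "bdd_below (\<phi> ` {t0..})" by (rule bdd_belowI[of _ 0]) (auto simp: nn)
  have PI: "L \<le> \<phi> r" if "r \<ge> t0" for r unfolding L_def using bdd that by (auto intro: cInf_lower)
  have "(\<phi> \<longlongrightarrow> L) at_top"
  proof (rule order_tendstoI)
    fix a assume aL: "a < L"
    show "eventually (\<lambda>t. a < \<phi> t) at_top"
      using eventually_ge_at_top[of t0] by eventually_elim (use PI aL in fastforce)
  next
    fix a assume "L < a"
    then obtain s where s: "s \<ge> t0" and Ps: "\<phi> s < a"
      unfolding L_def by (subst (asm) cInf_less_iff) (use bdd in auto)
    show "eventually (\<lambda>t. \<phi> t < a) at_top"
      using eventually_ge_at_top[of s] by eventually_elim (use mono s Ps in fastforce)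
  qed
  then show ?thesis by blast
qed

context sett begin

lemma y_bound: "t \<ge> t0 \<Longrightarrow> norm (y t) \<le> norm zm + norm (y t0 - zm)"
proof -
  assume t: "t \<ge> t0"
  have "(y t - zm) \<bullet> (y t - zm) / 2 \<le> (y t0 - zm) \<bullet> (y t0 - zm) / 2"
    using Phi_mono[of zm t0 t] zm_min t by blast
  then have "norm (y t - zm) \<le> norm (y t0 - zm)"
    by (simp add: power2_norm_eq_inner[symmetric] power2_le_iff_abs_le)
  then show ?thesis using norm_triangle_ineq[of "y t - zm" zm] by simp
qed

lemma fy_lim: "((\<lambda>t. f (y t)) \<longlongrightarrow> f zm) at_top"
proof -
  have "((\<lambda>t. tau t * (f (y t) - f zm) * inverse (tau t)) \<longlongrightarrow> 0 * 0) at_top"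
    by (intro tendsto_mult fy_rate tendsto_inverse_0_at_top tau_inf)
  moreover have "eventually (\<lambda>t. tau t * (f (y t) - f zm) * inverse (tau t) = f (y t) - f zm) at_top"
    using eventually_ge_at_top[of t0]
  proof eventually_elim
    case (elim t) then show ?case using tau_pos[of t] by simp
  qed
  ultimately have "((\<lambda>t. f (y t) - f zm) \<longlongrightarrow> 0) at_top"
    by (simp add: Lim_transform_eventually)
  then show ?thesis by (simp add: LIM_zero_iff)
qed

lemma cluster_in_S:
  assumes X: "filterlim Xs at_top sequentially"
    and w: "\<And>v. (\<lambda>n. y (Xs n) \<bullet> v) \<longlonglongrightarrow> u \<bullet> v"
  shows "\<forall>w. f u \<le> f w"
proof -
  have l1: "(\<lambda>n. f (y (Xs n))) \<longlonglongrightarrow> f zm"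
    using filterlim_compose[OF fy_lim X] by (simp add: o_def)
  have "(\<lambda>n. f u + (y (Xs n) \<bullet> gradf u - u \<bullet> gradf u)) \<longlonglongrightarrow> f u + (u \<bullet> gradf u - u \<bullet> gradf u)"
    by (intro tendsto_intros w)
  then have l2: "(\<lambda>n. f u + gradf u \<bullet> (y (Xs n) - u)) \<longlonglongrightarrow> f u"
    by (simp add: inner_diff_right inner_commute)
  have "f u \<le> f zm"
    using grad_ineq[OF f_convex f_grad] by (intro LIMSEQ_le[OF l2 l1]) auto
  then show ?thesis using zm_min order_trans by blast
qed

lemma cluster_ex:
  assumes T: "\<And>n. T n \<ge> t0 + real n"
  shows "\<exists>r u. strict_mono r \<and> (\<forall>v. (\<lambda>n. y (T (r n)) \<bullet> v) \<longlonglongrightarrow> u \<bullet> v) \<and> (\<forall>w. f u \<le> f w)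
              \<and> filterlim (\<lambda>n. T (r n)) at_top sequentially"
proof -
  have "norm (y (T n)) \<le> norm zm + norm (y t0 - zm)" for n
    using T[of n] by (intro y_bound) simp
  then obtain r u where r: "strict_mono r" and w: "\<forall>v. (\<lambda>n. y (T (r n)) \<bullet> v) \<longlonglongrightarrow> u \<bullet> v"
    using weak_compact[of "\<lambda>n. y (T n)"] by blast
  have X: "filterlim (\<lambda>n. T (r n)) at_top sequentially"
  proof (rule filterlim_at_top_mono[OF filterlim_real_sequentially])
    show "eventually (\<lambda>n. real n \<le> T (r n)) sequentially"
    proof (intro always_eventually allI)
      fix n
      have "real n \<le> real (r n)" using seq_suble[OF r, of n] by simp
      also have "\<dots> \<le> T (r n)" using T[of "r n"] t0_pos by simp
      finally show "real n \<le> T (r n)" .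
    qed
  qed
  show ?thesis using r w X cluster_in_S[OF X] by blast
qed

lemma Phi_conv:
  assumes zS: "\<forall>w. f z \<le> f w"
  shows "\<exists>L. ((\<lambda>t. (y t - z) \<bullet> (y t - z) / 2) \<longlongrightarrow> L) at_top"
  by (rule decr_conv[of t0]) (use Phi_mono[OF zS] in auto)

lemma inner_conv:
  assumes z1: "\<forall>w. f z1 \<le> f w" and z2: "\<forall>w. f z2 \<le> f w"
  shows "\<exists>\<alpha>. ((\<lambda>t. y t \<bullet> (z1 - z2)) \<longlongrightarrow> \<alpha>) at_top"
proof -
  obtain L1 where L1: "((\<lambda>t. (y t - z1) \<bullet> (y t - z1) / 2) \<longlongrightarrow> L1) at_top" using Phi_conv[OF z1] by blast
  obtain L2 where L2: "((\<lambda>t. (y t - z2) \<bullet> (y t - z2) / 2) \<longlongrightarrow> L2) at_top" using Phi_conv[OF z2] by blast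
  have e: "y t \<bullet> (z1 - z2) = (y t - z2) \<bullet> (y t - z2) / 2 - (y t - z1) \<bullet> (y t - z1) / 2 - z2 \<bullet> z2 / 2 + z1 \<bullet> z1 / 2" for t
    by (simp add: inner_diff inner_commute) (simp add: field_simps)
  show ?thesis unfolding e
    by (intro exI[of _ "L2 - L1 - z2 \<bullet> z2 / 2 + z1 \<bullet> z1 / 2"] tendsto_add tendsto_diff L1 L2 tendsto_const)
qed

lemma cluster_unique:
  assumes z1: "\<forall>w. f z1 \<le> f w" and z2: "\<forall>w. f z2 \<le> f w"
    and X1: "filterlim X1 at_top sequentially" and w1: "\<And>v. (\<lambda>n. y (X1 n) \<bullet> v) \<longlonglongrightarrow> z1 \<bullet> v"
    and X2: "filterlim X2 at_top sequentially" and w2: "\<And>v. (\<lambda>n. y (X2 n) \<bullet> v) \<longlonglongrightarrow> z2 \<bullet> v"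
  shows "z1 = z2"
proof -
  obtain \<alpha> where a: "((\<lambda>t. y t \<bullet> (z1 - z2)) \<longlongrightarrow> \<alpha>) at_top" using inner_conv[OF z1 z2] by blast
  have "(\<lambda>n. y (X1 n) \<bullet> (z1 - z2)) \<longlonglongrightarrow> \<alpha>" using filterlim_compose[OF a X1] by (simp add: o_def)
  then have a1: "\<alpha> = z1 \<bullet> (z1 - z2)" using w1 LIMSEQ_unique by blast
  have "(\<lambda>n. y (X2 n) \<bullet> (z1 - z2)) \<longlonglongrightarrow> \<alpha>" using filterlim_compose[OF a X2] by (simp add: o_def)
  then have a2: "\<alpha> = z2 \<bullet> (z1 - z2)" using w2 LIMSEQ_unique by blast
  have "(z1 - z2) \<bullet> (z1 - z2) = 0" using a1 a2 by (simp add: inner_diff_left)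
  then show ?thesis by simp
qed

lemma y_weak: "\<exists>z. (\<forall>w. f z \<le> f w) \<and> (\<forall>v. ((\<lambda>t. y t \<bullet> v) \<longlongrightarrow> z \<bullet> v) at_top)"
proof -
  obtain r z where r: "strict_mono r" and wz: "\<forall>v. (\<lambda>n. y (t0 + real (r n)) \<bullet> v) \<longlonglongrightarrow> z \<bullet> v"
    and zS: "\<forall>w. f z \<le> f w" and Xz: "filterlim (\<lambda>n. t0 + real (r n)) at_top sequentially"
    using cluster_ex[of "\<lambda>n. t0 + real n"] by auto
  have "((\<lambda>t. y t \<bullet> v) \<longlongrightarrow> z \<bullet> v) at_top" for v
  proof (rule ccontr)
    assume "\<not> ((\<lambda>t. y t \<bullet> v) \<longlongrightarrow> z \<bullet> v) at_top"
    then obtain e where e: "e > 0" and ne: "\<not> eventually (\<lambda>t. dist (y t \<bullet> v) (z \<bullet> v) < e) at_top"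
      unfolding tendsto_iff by blast
    have "\<forall>n. \<exists>t. t \<ge> t0 + real n \<and> \<not> dist (y t \<bullet> v) (z \<bullet> v) < e"
      using ne unfolding eventually_at_top_linorder by blast
    then obtain T where T: "\<And>n. T n \<ge> t0 + real n" and Tn: "\<And>n. \<not> dist (y (T n) \<bullet> v) (z \<bullet> v) < e"
      by metis
    obtain r' u where r': "strict_mono r'" and wu: "\<forall>v. (\<lambda>n. y (T (r' n)) \<bullet> v) \<longlonglongrightarrow> u \<bullet> v"
      and uS: "\<forall>w. f u \<le> f w" and Xu: "filterlim (\<lambda>n. T (r' n)) at_top sequentially"
      using cluster_ex[OF T] by blast
    have "u = z" using cluster_unique[OF uS zS Xu _ Xz] wu wz by blast
    then have "(\<lambda>n. y (T (r' n)) \<bullet> v) \<longlonglongrightarrow> z \<bullet> v" using wu by simp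
    then have "eventually (\<lambda>n. dist (y (T (r' n)) \<bullet> v) (z \<bullet> v) < e) sequentially"
      using e unfolding tendsto_iff by blast
    then show False using Tn by (auto simp: eventually_sequentially)
  qed
  then show ?thesis using zS by blast
qed

end


context sett begin

lemma avg_upper:
  fixes a b :: "real \<Rightarrow> real"
  assumes ad: "\<And>r. r \<ge> t0 \<Longrightarrow> (a has_real_derivative (\<gamma> * dtau r / tau r) * (b r - a r)) (at r within {t0..})"
    and ev: "eventually (\<lambda>t. b t < l + \<epsilon> / 2) at_top" and e: "\<epsilon> > 0"
  shows "eventually (\<lambda>t. a t < l + \<epsilon>) at_top"
proof -
  obtain T0 where T0: "\<And>t. t \<ge> T0 \<Longrightarrow> b t < l + \<epsilon> / 2"
    using ev unfolding eventually_at_top_linorder by blast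
  define T where "T = max T0 t0"
  have T: "T \<ge> t0" "T \<ge> T0" by (auto simp: T_def)
  define h where "h r = tau r powr \<gamma> * (a r - l)" for r
  have main: "h t \<le> \<bar>h T\<bar> + \<epsilon> / 2 * tau t powr \<gamma>" if t: "t \<ge> T" for t
  proof -
    define \<omega> where "\<omega> r = h r - \<epsilon> / 2 * tau r powr \<gamma>" for r
    have "\<omega> t \<le> \<omega> T"
    proof (rule decr2[OF t T(1)])
      fix r assume r: "r \<ge> T"
      then have rt: "r \<ge> t0" using T by simp
      show "(\<omega> has_real_derivative ((\<gamma> * tau r powr (\<gamma> - 1) * dtau r * (a r - l) + tau r powr \<gamma> * ((\<gamma> * dtau r / tau r) * (b r - a r)))
              - \<epsilon> / 2 * (\<gamma> * tau r powr (\<gamma> - 1) * dtau r))) (at r within {t0..})"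
        unfolding \<omega>_def[abs_def] h_def
        by (rule DERIV_cong[OF DERIV_diff[OF DERIV_mult[OF taupow_deriv[OF rt] DERIV_diff[OF ad[OF rt] DERIV_const]]
              DERIV_cmult[OF taupow_deriv[OF rt]]]]) simp
      have tp: "tau r > 0" and dp: "dtau r > 0" using tau_pos[OF rt] dtau_pos[OF rt] by auto
      have e1: "tau r powr \<gamma> * ((\<gamma> * dtau r / tau r) * (b r - a r)) = \<gamma> * tau r powr (\<gamma> - 1) * dtau r * (b r - a r)"
        using tp by (simp add: powr_diff field_simps)
      have "b r - l - \<epsilon> / 2 \<le> 0" using T0[of r] r T by simp
      then have "\<gamma> * tau r powr (\<gamma> - 1) * dtau r * (b r - l - \<epsilon> / 2) \<le> 0"
        using gpos tp dp by (simp add: mult_nonneg_nonpos)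
      then show "(\<gamma> * tau r powr (\<gamma> - 1) * dtau r * (a r - l) + tau r powr \<gamma> * ((\<gamma> * dtau r / tau r) * (b r - a r)))
              - \<epsilon> / 2 * (\<gamma> * tau r powr (\<gamma> - 1) * dtau r) \<le> 0"
        unfolding e1 by (simp add: algebra_simps)
    qed
    moreover have "0 \<le> \<epsilon> / 2 * tau T powr \<gamma>" using e by simp
    ultimately show ?thesis unfolding \<omega>_def by linarith
  qed
  define K where "K = 2 * (\<bar>h T\<bar> + 1) / \<epsilon>"
  have Kp: "K > 0" using e by (simp add: K_def)
  have ev2: "eventually (\<lambda>t. tau t > K powr (1 / \<gamma>)) at_top"
    using tau_inf unfolding filterlim_at_top_dense by blast
  show ?thesis
    using ev2 eventually_ge_at_top[of T]
  proof eventually_elim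
    case (elim t)
    then have tT: "t \<ge> T" and tt: "t \<ge> t0" using T by auto
    have tp: "tau t > 0" using tau_pos[OF tt] .
    have "(K powr (1 / \<gamma>)) powr \<gamma> < tau t powr \<gamma>"
      using powr_less_mono2[OF gpos _ elim(1)] by simp
    then have big: "K < tau t powr \<gamma>" using gpos Kp by (simp add: powr_powr)
    have tg: "tau t powr \<gamma> > 0" using tp by simp
    have "a t - l = h t / tau t powr \<gamma>" using tp by (simp add: h_def)
    also have "\<dots> \<le> (\<bar>h T\<bar> + \<epsilon> / 2 * tau t powr \<gamma>) / tau t powr \<gamma>"
      using main[OF tT] tg by (simp add: divide_right_mono)
    also have "\<dots> = \<bar>h T\<bar> / tau t powr \<gamma> + \<epsilon> / 2" using tg by (simp add: field_simps)
    also have "\<bar>h T\<bar> / tau t powr \<gamma> < \<epsilon> / 2"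
    proof -
      have "2 * (\<bar>h T\<bar> + 1) < \<epsilon> * tau t powr \<gamma>" using big e by (simp add: K_def field_simps)
      then show ?thesis using tg e by (simp add: field_simps)
    qed
    finally show ?case by simp
  qed
qed

lemma x_weak:
  assumes yw: "\<And>v. ((\<lambda>t. y t \<bullet> v) \<longlongrightarrow> z \<bullet> v) at_top"
  shows "((\<lambda>t. x t \<bullet> v) \<longlongrightarrow> z \<bullet> v) at_top"
proof -
  have ad: "((\<lambda>s. x s \<bullet> v) has_real_derivative (\<gamma> * dtau r / tau r) * (y r \<bullet> v - x r \<bullet> v)) (at r within {t0..})"
    if r: "r \<ge> t0" for r
  proof -
    have "((\<lambda>s. x s \<bullet> v) has_vector_derivative (x' r \<bullet> v)) (at r within {t0..})"
      by (rule bounded_linear.has_vector_derivative[OF bounded_linear_inner_left x_d1[OF r]])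
    then show ?thesis unfolding has_real_derivative_iff_has_vector_derivative[symmetric] x'_eq[OF r]
      by (simp add: inner_diff_left)
  qed
  have ad2: "((\<lambda>s. - (x s \<bullet> v)) has_real_derivative (\<gamma> * dtau r / tau r) * (- (y r \<bullet> v) - - (x r \<bullet> v))) (at r within {t0..})"
    if r: "r \<ge> t0" for r
    using DERIV_minus[OF ad[OF r]] by (simp add: algebra_simps)
  show ?thesis
  proof (rule order_tendstoI)
    fix c assume c: "c > z \<bullet> v"
    have "eventually (\<lambda>t. y t \<bullet> v < z \<bullet> v + (c - z \<bullet> v) / 2) at_top"
      using yw[of v] c by (intro order_tendstoD) auto
    from avg_upper[OF ad this] c show "eventually (\<lambda>t. x t \<bullet> v < c) at_top" by simp
  next
    fix c assume c: "c < z \<bullet> v"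
    have "eventually (\<lambda>t. - (y t \<bullet> v) < - (z \<bullet> v) + (z \<bullet> v - c) / 2) at_top"
      using tendsto_minus[OF yw[of v]] c by (intro order_tendstoD) auto
    from avg_upper[OF ad2 this] c show "eventually (\<lambda>t. c < x t \<bullet> v) at_top" by simp
  qed
qed

lemma final:
  "(\<lambda>t. f (x t) - (INF y. f y)) \<in> o(\<lambda>t. t powr (-(1 + q - 1 / p)))
   \<and> (\<exists>z. (\<forall>y. f z \<le> f y) \<and> (\<forall>v. ((\<lambda>t. x t \<bullet> v) \<longlongrightarrow> z \<bullet> v) at_top))"
proof (intro conjI rate_final)
  obtain z where zS: "\<forall>w. f z \<le> f w" and yw: "\<forall>v. ((\<lambda>t. y t \<bullet> v) \<longlongrightarrow> z \<bullet> v) at_top"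
    using y_weak by blast
  show "\<exists>z. (\<forall>y. f z \<le> f y) \<and> (\<forall>v. ((\<lambda>t. x t \<bullet> v) \<longlongrightarrow> z \<bullet> v) at_top)"
    using zS x_weak yw by blast
qed

end

theorem mainTheorem8:
  fixes f :: "'a::{real_inner, complete_space} \<Rightarrow> real"
    and gradf :: "'a \<Rightarrow> 'a"
    and t0 q p \<gamma> :: real
    and x x' x'' :: "real \<Rightarrow> 'a"
    and lam lam' :: "real \<Rightarrow> real"
    and tau dtau ddtau :: "real \<Rightarrow> real"
  assumes f_convex: "convex_on UNIV f"
    and f_grad: "\<And>u. (f has_derivative (\<lambda>h. gradf u \<bullet> h)) (at u)"
    and grad_cont: "continuous_on UNIV gradf"
    and grad_lip: "\<And>B. bounded B \<Longrightarrow>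
          \<exists>L. \<forall>u\<in>B. \<forall>v\<in>B. norm (gradf u - gradf v) \<le> L * norm (u - v)"
    and S_ne: "\<exists>z. \<forall>y. f z \<le> f y"
    and t0_pos: "t0 > 0" and q_pos: "q > 0" and p_ge: "p \<ge> 1" and gamma_gt: "\<gamma> > 1"
    and x_d1: "\<And>t. t \<ge> t0 \<Longrightarrow> (x has_vector_derivative x' t) (at t within {t0..})"
    and x_d2: "\<And>t. t \<ge> t0 \<Longrightarrow> (x' has_vector_derivative x'' t) (at t within {t0..})"
    and x''_cont: "continuous_on {t0..} x''"
    and lam_pos: "\<And>t. t \<ge> t0 \<Longrightarrow> lam t > 0"
    and lam_d: "\<And>t. t \<ge> t0 \<Longrightarrow> (lam has_real_derivative lam' t) (at t within {t0..})"
    and lam'_cont: "continuous_on {t0..} lam'"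
    and tau_def: "\<And>t. tau t = (1 / q powr q) *
          (t0 + integral {t0..t} (\<lambda>r. lam r powr (1 / q))) powr q"
    and tau_d1: "\<And>t. t \<ge> t0 \<Longrightarrow> (tau has_real_derivative dtau t) (at t within {t0..})"
    and tau_d2: "\<And>t. t \<ge> t0 \<Longrightarrow> (dtau has_real_derivative ddtau t) (at t within {t0..})"
    and ode: "\<And>t. t \<ge> t0 \<Longrightarrow>
          x'' t + (((1 + \<gamma>) * (dtau t)\<^sup>2 - tau t * ddtau t) / (tau t * dtau t)) *\<^sub>R x' t
          + (\<gamma> * (dtau t)\<^sup>2 / tau t) *\<^sub>R gradf (x t + ((1 / \<gamma>) * (tau t / dtau t)) *\<^sub>R x' t) = 0"
    and coupling: "\<And>t. t \<ge> t0 \<Longrightarrow>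
          lam t powr p * \<bar>dtau t\<bar> powr (p - 1) *
          (if p = 1 then 1
           else norm (gradf (x t + ((1 / \<gamma>) * (tau t / dtau t)) *\<^sub>R x' t)) powr (p - 1)) = 1"
  shows "(\<lambda>t. f (x t) - (INF y. f y)) \<in> o(\<lambda>t. t powr (-(1 + q - 1 / p)))
         \<and> (\<exists>z. (\<forall>y. f z \<le> f y) \<and> weak_conv_at_top x z)"
proof -
  interpret sett f gradf t0 q p \<gamma> x x' x'' lam lam' tau dtau ddtau
    by unfold_locales (fact f_convex f_grad S_ne t0_pos q_pos p_ge gamma_gt x_d1 x_d2 lam_pos lam_d
        tau_def tau_d1 tau_d2 ode coupling)+
  show ?thesis using final unfolding weak_conv_at_top_def by blast
qed

end
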